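(* Suppose Assumption A holds and the regularizer is $M_h$-Lipschitz ($h^{\pi(\cdot\mid s)}(s)-h^{\pi'(\cdot\mid s)}(s)\le M_h\|\pi(\cdot\mid s)-\pi'(\cdot\mid s)\|$ for all $s,\pi,\pi'$). Let $\bar D_0>0$ satisfy $\max_{s,\pi}D^\pi_{\pi_0}(s)\le\bar D_0$ and let $k\ge1$. If SPMD uses $\eta_t=\alpha/\sqrt k$ for some $\alpha>0$, then for all $s\in\mathcal S$, $$\mathbb E[V^{\pi_{k-1}}(s)-V^{\pi^*}(s)]\le\frac{\alpha^{-1}\bar D_0+2\alpha(\bar Q^2+M_h^2)\log(2k)}{(1-\gamma)\sqrt k}+\frac{4\varsigma(\sqrt2+8\sqrt k)}{1-\gamma}.$$ If moreover $\mu_h>0$ and SPMD uses $\eta_t=\frac1{\mu_h(t+1)}$, then for all $s\in\mathcal S$, $$\mathbb E[V^{\pi_{k-1}}(s)-V^{\pi^*}(s)]\le\frac{\mu_h\bar D_0+3\mu_h^{-1}(\bar Q^2+M_h^2)\ln(2k)}{(1-\gamma)k}+\frac{4\varsigma\ln(2k)}{1-\gamma}.$$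
   Context: MDP: finite $\mathcal S$, $\mathcal A$, transition probabilities $\mathcal P(s'\mid s,a)$, cost $c$, discount $\gamma\in[0,1)$; policies assign $\pi(\cdot\mid s)\in\Delta_{|\mathcal A|}$. $\|\cdot\|$ is a norm on $\mathbb R^{|\mathcal A|}$ with $\max_{p\in\Delta_{|\mathcal A|}}\|p\|\le1$ and dual $\|\cdot\|_*$; for $F:\mathcal S\times\mathcal A\to\mathbb R$, $\|F\|_*:=\max_s\|F(s,\cdot)\|_*$. $\omega$ is a differentiable distance-generating function on $\Delta_{|\mathcal A|}$, 1-strongly convex w.r.t. $\|\cdot\|$; $D^{\pi'}_\pi(s):=\omega(\pi'(\cdot\mid s))-\omega(\pi(\cdot\mid s))-\langle\nabla\omega(\pi(\cdot\mid s)),\pi'(\cdot\mid s)-\pi(\cdot\mid s)\rangle$. For each $s$, $p\mapsto h^p(s)$ is closed convex with $h^{p}(s)-h^{p'}(s)-\langle (h')^{p'}(s,\cdot),p-p'\rangle\ge\mu_h[\omega(p)-\omega(p')-\langle\nabla\omega(p'),p-p'\rangle]$, $\mu_h\ge0$. $V^\pi(s)=\mathbb E[\sum_{t\ge0}\gamma^t(c(s_t,a_t)+h^{\pi(\cdot\mid s_t)}(s_t))\mid s_0=s,\ a_t\sim\pi(\cdot\mid s_t),\ s_{t+1}\sim\mathcal P(\cdot\mid s_t,a_t)]$, $Q^\pi$ the same with $a_0=a$; $\pi^*$ optimal. SPMD: random $\xi_t$ yields estimate $\tilde Q^{\pi_t}$ and $\pi_{t+1}(\cdot\mid s)=\operatorname{argmin}_p\{\eta_t[\langle\tilde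 Q^{\pi_t}(s,\cdot),p\rangle+h^p(s)]+\omega(p)-\omega(\pi_t(\cdot\mid s))-\langle\nabla\omega(\pi_t(\cdot\mid s)),p-\pi_t(\cdot\mid s)\rangle\}$; $\pi_t$ determined by $\xi_{[t-1]}$. Assumption A: $\varsigma,\sigma,\bar Q\ge0$ with $\|\mathbb E_{\xi_t\mid\xi_{[t-1]}}[\tilde Q^{\pi_t}]-Q^{\pi_t}\|_*\le\varsigma$, $\mathbb E_{\xi_t\mid\xi_{[t-1]}}\|\tilde Q^{\pi_t}-Q^{\pi_t}\|_*^2\le\sigma^2$, $\mathbb E_{\xi_t\mid\xi_{[t-1]}}\|\tilde Q^{\pi_t}\|_*^2\le\bar Q^2$. *)

theory Defs
  imports "HOL-Probability.Probability"
begin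

definition prob_simplex :: "(real ^ 'a::finite) set" where
  "prob_simplex = {p. (\<forall>a. 0 \<le> p $ a) \<and> (\<Sum>a\<in>UNIV. p $ a) = 1}"

definition is_norm_fn :: "(real ^ 'a::finite \<Rightarrow> real) \<Rightarrow> bool" where
  "is_norm_fn nrm \<longleftrightarrow>
     (\<forall>x y. nrm (x + y) \<le> nrm x + nrm y) \<and>
     (\<forall>c x. nrm (c *\<^sub>R x) = \<bar>c\<bar> * nrm x) \<and>
     (\<forall>x. nrm x = 0 \<longleftrightarrow> x = 0)"

definition dual_norm :: "(real ^ 'a::finite \<Rightarrow> real) \<Rightarrow> real ^ 'a \<Rightarrow> real" where
  "dual_norm nrm q = Sup {q \<bullet> p | p. nrm p \<le> 1}"

definition dual_normF :: "(real ^ 'a::finite \<Rightarrow> real) \<Rightarrow> ('s::finite \<Rightarrow> real ^ 'a) \<Rightarrow> real" where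
  "dual_normF nrm F = Max (range (\<lambda>s. dual_norm nrm (F s)))"

definition bregman :: "(real ^ 'a::finite \<Rightarrow> real) \<Rightarrow> (real ^ 'a \<Rightarrow> real ^ 'a)
    \<Rightarrow> real ^ 'a \<Rightarrow> real ^ 'a \<Rightarrow> real" where
  "bregman \<omega> g\<omega> p' p = \<omega> p' - \<omega> p - g\<omega> p \<bullet> (p' - p)"

definition is_dgf :: "(real ^ 'a::finite \<Rightarrow> real) \<Rightarrow> (real ^ 'a \<Rightarrow> real)
    \<Rightarrow> (real ^ 'a \<Rightarrow> real ^ 'a) \<Rightarrow> bool" where
  "is_dgf nrm \<omega> g\<omega> \<longleftrightarrow>
     (\<forall>p\<in>prob_simplex. (\<omega> has_derivative (\<lambda>v. g\<omega> p \<bullet> v)) (at p within prob_simplex)) \<and>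
     (\<forall>p\<in>prob_simplex. \<forall>p'\<in>prob_simplex. bregman \<omega> g\<omega> p' p \<ge> (1/2) * (nrm (p' - p))\<^sup>2)"

text \<open>A policy maps each state to a distribution over actions: pol s $ a = pi(a|s).\<close>
definition is_policy :: "('s \<Rightarrow> real ^ 'a::finite) \<Rightarrow> bool" where
  "is_policy pol \<longleftrightarrow> (\<forall>s. pol s \<in> prob_simplex)"

definition is_transition :: "('s::finite \<Rightarrow> 'a \<Rightarrow> 's \<Rightarrow> real) \<Rightarrow> bool" where
  "is_transition P \<longleftrightarrow> (\<forall>s a. (\<forall>s'. 0 \<le> P s a s') \<and> (\<Sum>s'\<in>UNIV. P s a s') = 1)"

fun state_dist :: "('s::finite \<Rightarrow> 'a::finite \<Rightarrow> 's \<Rightarrow> real) \<Rightarrow> ('s \<Rightarrow> real ^ 'a)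
    \<Rightarrow> ('s \<Rightarrow> real) \<Rightarrow> nat \<Rightarrow> 's \<Rightarrow> real" where
  "state_dist P pol mu0 0 = mu0"
| "state_dist P pol mu0 (Suc t) =
     (\<lambda>s''. \<Sum>s'\<in>UNIV. state_dist P pol mu0 t s' * (\<Sum>a\<in>UNIV. pol s' $ a * P s' a s''))"

definition stage_cost :: "('s \<Rightarrow> 'a::finite \<Rightarrow> real) \<Rightarrow> ('s \<Rightarrow> real ^ 'a \<Rightarrow> real)
    \<Rightarrow> ('s \<Rightarrow> real ^ 'a) \<Rightarrow> 's \<Rightarrow> real" where
  "stage_cost c h pol s = (\<Sum>a\<in>UNIV. pol s $ a * c s a) + h s (pol s)"

text \<open>V^pi(s) = E[ sum_t gamma^t (c(s_t,a_t) + h^{pi(.|s_t)}(s_t)) | s_0 = s ].\<close>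
definition Vfun :: "('s::finite \<Rightarrow> 'a::finite \<Rightarrow> 's \<Rightarrow> real) \<Rightarrow> ('s \<Rightarrow> 'a \<Rightarrow> real)
    \<Rightarrow> ('s \<Rightarrow> real ^ 'a \<Rightarrow> real) \<Rightarrow> real \<Rightarrow> ('s \<Rightarrow> real ^ 'a) \<Rightarrow> 's \<Rightarrow> real" where
  "Vfun P c h \<gamma> pol s =
     (\<Sum>t. \<gamma> ^ t * (\<Sum>s'\<in>UNIV. state_dist P pol (\<lambda>x. if x = s then 1 else 0) t s' * stage_cost c h pol s'))"

text \<open>Q^pi(s,a): same expectation with a_0 = a (so s_1 ~ P(.|s,a)).\<close>
definition Qfun :: "('s::finite \<Rightarrow> 'a::finite \<Rightarrow> 's \<Rightarrow> real) \<Rightarrow> ('s \<Rightarrow> 'a \<Rightarrow> real)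
    \<Rightarrow> ('s \<Rightarrow> real ^ 'a \<Rightarrow> real) \<Rightarrow> real \<Rightarrow> ('s \<Rightarrow> real ^ 'a) \<Rightarrow> 's \<Rightarrow> real ^ 'a" where
  "Qfun P c h \<gamma> pol s = (\<chi> a. c s a + h s (pol s) +
     (\<Sum>t. \<gamma> ^ Suc t * (\<Sum>s'\<in>UNIV. state_dist P pol (P s a) t s' * stage_cost c h pol s')))"

definition regularizer_ok :: "(real ^ 'a::finite \<Rightarrow> real) \<Rightarrow> (real ^ 'a \<Rightarrow> real ^ 'a)
    \<Rightarrow> ('s \<Rightarrow> real ^ 'a \<Rightarrow> real) \<Rightarrow> real \<Rightarrow> bool" where
  "regularizer_ok \<omega> g\<omega> h \<mu>h \<longleftrightarrow> 0 \<le> \<mu>h \<and>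
     (\<forall>s. convex_on prob_simplex (h s)) \<and>
     (\<forall>s. \<forall>p'\<in>prob_simplex. \<forall>g. (\<forall>p\<in>prob_simplex. h s p \<ge> h s p' + g \<bullet> (p - p')) \<longrightarrow>
         (\<forall>p\<in>prob_simplex. h s p - h s p' - g \<bullet> (p - p') \<ge> \<mu>h * bregman \<omega> g\<omega> p p'))"

text \<open>sigma(xi_0, ..., xi_{t-1}) (trivial for t = 0).\<close>
definition hist_alg :: "'w measure \<Rightarrow> 'x measure \<Rightarrow> (nat \<Rightarrow> 'w \<Rightarrow> 'x) \<Rightarrow> nat \<Rightarrow> 'w measure" where
  "hist_alg M X \<xi> t = sigma (space M) {\<xi> i -` A \<inter> space M | i A. i < t \<and> A \<in> sets X}"

end

theory Submission
  imports Defs "HOL-Analysis.Harmonic_Numbers"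
begin

context
  fixes nrm :: "real ^ 'a::finite \<Rightarrow> real"
  assumes N: "is_norm_fn nrm"
begin

lemma nrm_triangle: "nrm (x + y) \<le> nrm x + nrm y"
  using N unfolding is_norm_fn_def by blast
lemma nrm_scale: "nrm (c *\<^sub>R x) = \<bar>c\<bar> * nrm x"
  using N unfolding is_norm_fn_def by blast
lemma nrm_zero_iff: "nrm x = 0 \<longleftrightarrow> x = 0"
  using N unfolding is_norm_fn_def by blast

lemma nrm_zero[simp]: "nrm 0 = 0"
  using nrm_zero_iff by simp

lemma nrm_neg: "nrm (- x) = nrm x"
  using nrm_scale[of "-1" x] by simp

lemma nrm_nonneg: "0 \<le> nrm x"
proof -
  have "nrm (x + - x) \<le> nrm x + nrm (- x)" by (rule nrm_triangle)
  then show ?thesis by (simp add: nrm_neg)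
qed

lemma nrm_minus_commute: "nrm (x - y) = nrm (y - x)"
  using nrm_neg[of "x - y"] by simp

lemma nrm_sum: "nrm (sum f A) \<le> (\<Sum>i\<in>A. nrm (f i))"
proof (induction A rule: infinite_finite_induct)
  case (insert x F)
  then show ?case using nrm_triangle[of "f x" "sum f F"] by simp
qed simp_all

definition nB :: real where "nB = (\<Sum>b\<in>(Basis::(real^'a) set). nrm b)"

lemma nrm_upper: "nrm x \<le> nB * norm x"
proof -
  have "nrm x = nrm (\<Sum>b\<in>Basis. (x \<bullet> b) *\<^sub>R b)" by (simp add: euclidean_representation)
  also have "\<dots> \<le> (\<Sum>b\<in>Basis. nrm ((x \<bullet> b) *\<^sub>R b))" by (rule nrm_sum)
  also have "\<dots> = (\<Sum>b\<in>Basis. \<bar>x \<bullet> b\<bar> * nrm b)" by (simp add: nrm_scale)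
  also have "\<dots> \<le> (\<Sum>b\<in>(Basis::(real^'a) set). norm x * nrm b)"
    by (intro sum_mono mult_right_mono) (auto simp: Basis_le_norm nrm_nonneg)
  also have "\<dots> = nB * norm x" by (simp add: nB_def sum_distrib_left mult.commute)
  finally show ?thesis .
qed

lemma nB_nonneg: "0 \<le> nB"
  unfolding nB_def by (intro sum_nonneg) (simp add: nrm_nonneg)

lemma nrm_lip: "nB-lipschitz_on UNIV nrm"
proof (rule lipschitz_onI)
  fix x y :: "real^'a"
  have "nrm x \<le> nrm y + nrm (x - y)" using nrm_triangle[of y "x - y"] by simp
  moreover have "nrm y \<le> nrm x + nrm (y - x)" using nrm_triangle[of x "y - x"] by simp
  ultimately have "\<bar>nrm x - nrm y\<bar> \<le> nrm (x - y)" using nrm_minus_commute[of x y] by linarith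
  also have "\<dots> \<le> nB * norm (x - y)" by (rule nrm_upper)
  finally show "dist (nrm x) (nrm y) \<le> nB * dist x y" by (simp add: dist_norm dist_real_def)
qed (rule nB_nonneg)

lemma nrm_cont: "continuous_on UNIV nrm"
  using nrm_lip by (rule lipschitz_on_continuous_on)

lemma nrm_lower_ex: "\<exists>m>0. \<forall>x. m * norm x \<le> nrm x"
proof -
  obtain i :: 'a where True by simp
  have ne: "sphere (0::real^'a) 1 \<noteq> {}"
    using norm_axis_1[of i] by (metis mem_sphere_0 empty_iff)
  obtain x0 where x0: "x0 \<in> sphere (0::real^'a) 1" "\<forall>y\<in>sphere 0 1. nrm x0 \<le> nrm y"
    using continuous_attains_inf[OF compact_sphere ne continuous_on_subset[OF nrm_cont]] by blast
  have "x0 \<noteq> 0" using x0(1) by auto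
  then have pos: "nrm x0 > 0" using nrm_nonneg[of x0] nrm_zero_iff[of x0] by linarith
  have "nrm x0 * norm x \<le> nrm x" for x
  proof (cases "x = 0")
    case False
    then have "norm x > 0" by simp
    have "(inverse (norm x)) *\<^sub>R x \<in> sphere 0 1" using False by (simp add: norm_scaleR)
    then have "nrm x0 \<le> nrm ((inverse (norm x)) *\<^sub>R x)" using x0 by blast
    also have "\<dots> = inverse (norm x) * nrm x" by (simp add: nrm_scale)
    finally show ?thesis using \<open>norm x > 0\<close> by (simp add: field_simps)
  qed simp
  then show ?thesis using pos by blast
qed

definition nm :: real where "nm = (SOME m. m > 0 \<and> (\<forall>x. m * norm x \<le> nrm x))"

lemma nm: "nm > 0" "nm * norm x \<le> nrm x"
  using someI_ex[OF nrm_lower_ex] unfolding nm_def by blast+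

lemma dn_set_bdd: "bdd_above {q \<bullet> p |p. nrm p \<le> 1}"
proof (rule bdd_aboveI)
  fix y assume "y \<in> {q \<bullet> p |p. nrm p \<le> 1}"
  then obtain p where p: "y = q \<bullet> p" "nrm p \<le> 1" by blast
  have "nm * norm p \<le> 1" using nm(2)[of p] p(2) by linarith
  then have "norm p \<le> 1 / nm" using nm(1) by (simp add: field_simps)
  have "y \<le> norm q * norm p" using p(1) Cauchy_Schwarz_ineq2 by (metis norm_cauchy_schwarz)
  also have "\<dots> \<le> norm q * (1 / nm)" by (intro mult_left_mono \<open>norm p \<le> 1 / nm\<close>) simp
  finally show "y \<le> norm q / nm" by simp
qed

lemma dn_set_ne: "{q \<bullet> p |p. nrm p \<le> 1} \<noteq> {}"
proof -
  have "q \<bullet> 0 \<in> {q \<bullet> p |p. nrm p \<le> 1}" using nrm_zero by (metis (mono_tags, lifting) mem_Collect_eq order_refl zero_le_one)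
  then show ?thesis by blast
qed

lemma dn_upper: "nrm p \<le> 1 \<Longrightarrow> q \<bullet> p \<le> dual_norm nrm q"
  unfolding dual_norm_def by (rule cSup_upper[OF _ dn_set_bdd]) blast

lemma dn_nonneg: "0 \<le> dual_norm nrm q"
  using dn_upper[of 0 q] by simp

lemma dn_least: "(\<And>p. nrm p \<le> 1 \<Longrightarrow> q \<bullet> p \<le> B) \<Longrightarrow> dual_norm nrm q \<le> B"
  unfolding dual_norm_def by (rule cSup_least[OF dn_set_ne]) blast

lemma holder: "q \<bullet> v \<le> dual_norm nrm q * nrm v"
proof (cases "v = 0")
  case True then show ?thesis by simp
next
  case False
  then have pos: "nrm v > 0" using nrm_nonneg[of v] nrm_zero_iff[of v] by linarith
  have "nrm (inverse (nrm v) *\<^sub>R v) = 1" using pos by (simp add: nrm_scale)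
  then have "q \<bullet> (inverse (nrm v) *\<^sub>R v) \<le> dual_norm nrm q" using dn_upper by (metis order_refl)
  then have "inverse (nrm v) * (q \<bullet> v) \<le> dual_norm nrm q" by (simp add: inner_scaleR_right)
  then have "(q \<bullet> v) / nrm v \<le> dual_norm nrm q" by (simp add: divide_inverse mult.commute)
  then show ?thesis using pos by (simp add: pos_divide_le_eq)
qed

lemma dn_le_norm: "dual_norm nrm q \<le> norm q / nm"
proof (rule dn_least)
  fix p assume "nrm p \<le> 1"
  have "nm * norm p \<le> 1" using nm(2)[of p] \<open>nrm p \<le> 1\<close> by linarith
  then have "norm p \<le> 1 / nm" using nm(1) by (simp add: field_simps)
  have "q \<bullet> p \<le> norm q * norm p" by (metis norm_cauchy_schwarz)
  also have "\<dots> \<le> norm q * (1 / nm)" by (intro mult_left_mono \<open>norm p \<le> 1 / nm\<close>) simp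
  finally show "q \<bullet> p \<le> norm q / nm" by simp
qed

lemma dn_triangle: "dual_norm nrm (q + r) \<le> dual_norm nrm q + dual_norm nrm r"
proof (rule dn_least)
  fix p assume "nrm p \<le> 1"
  then show "(q + r) \<bullet> p \<le> dual_norm nrm q + dual_norm nrm r"
    using dn_upper[of p q] dn_upper[of p r] by (simp add: inner_add_left)
qed

lemma dn_lip: "(1/nm)-lipschitz_on UNIV (dual_norm nrm)"
proof (rule lipschitz_onI)
  fix x y :: "real^'a"
  have "dual_norm nrm x \<le> dual_norm nrm y + dual_norm nrm (x - y)" using dn_triangle[of y "x - y"] by simp
  moreover have "dual_norm nrm y \<le> dual_norm nrm x + dual_norm nrm (y - x)" using dn_triangle[of x "y - x"] by simp
  moreover have "dual_norm nrm (x - y) \<le> norm (x - y) / nm" by (rule dn_le_norm)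
  moreover have "dual_norm nrm (y - x) \<le> norm (x - y) / nm" using dn_le_norm[of "y - x"] by (simp add: norm_minus_commute)
  ultimately show "dist (dual_norm nrm x) (dual_norm nrm y) \<le> 1 / nm * dist x y"
    by (simp add: dist_norm dist_real_def)
qed (use nm(1) in simp)

lemma dn_cont: "continuous_on UNIV (dual_norm nrm)"
  using dn_lip by (rule lipschitz_on_continuous_on)

lemma comp_bound: "\<bar>q $ i\<bar> \<le> nrm (axis i 1) * dual_norm nrm q"
proof -
  have "q \<bullet> axis i 1 \<le> dual_norm nrm q * nrm (axis i 1)" by (rule holder)
  moreover have "q \<bullet> (- axis i 1) \<le> dual_norm nrm q * nrm (- axis i 1)" by (rule holder)
  ultimately show ?thesis by (simp add: cart_eq_inner_axis nrm_neg mult.commute abs_le_iff)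
qed

end

definition Kop :: "('s::finite \<Rightarrow> 'a::finite \<Rightarrow> 's \<Rightarrow> real) \<Rightarrow> ('s \<Rightarrow> real^'a) \<Rightarrow> ('s \<Rightarrow> real) \<Rightarrow> 's \<Rightarrow> real" where
  "Kop P pol f s = (\<Sum>a\<in>UNIV. pol s $ a * (\<Sum>s'\<in>UNIV. P s a s' * f s'))"

definition Wop :: "('s::finite \<Rightarrow> 'a::finite \<Rightarrow> 's \<Rightarrow> real) \<Rightarrow> real \<Rightarrow> ('s \<Rightarrow> real^'a) \<Rightarrow> ('s \<Rightarrow> real) \<Rightarrow> 's \<Rightarrow> real" where
  "Wop P \<gamma> pol f s = (\<Sum>t. \<gamma>^t * (Kop P pol ^^ t) f s)"

lemma Kop_add: "Kop P pol (\<lambda>s. f s + g s) s = Kop P pol f s + Kop P pol g s"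
  by (simp add: Kop_def distrib_left sum.distrib)
lemma Kop_diff: "Kop P pol (\<lambda>s. f s - g s) s = Kop P pol f s - Kop P pol g s"
  by (simp add: Kop_def right_diff_distrib sum_subtractf)
lemma Kop_scale: "Kop P pol (\<lambda>s. c * f s) s = c * Kop P pol f s"
  by (simp add: Kop_def sum_distrib_left mult.left_commute)

lemma Kop_suminf:
  assumes "\<And>s'. summable (\<lambda>t. g t s')"
  shows "(\<Sum>t. Kop P pol (g t) s) = Kop P pol (\<lambda>s'. \<Sum>t. g t s') s"
proof -
  have "(\<Sum>t. Kop P pol (g t) s) = (\<Sum>t. \<Sum>a\<in>UNIV. \<Sum>s'\<in>UNIV. pol s $ a * P s a s' * g t s')"
    by (simp add: Kop_def sum_distrib_left mult.assoc)
  also have "\<dots> = (\<Sum>a\<in>UNIV. \<Sum>t. \<Sum>s'\<in>UNIV. pol s $ a * P s a s' * g t s')"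
    by (intro suminf_sum summable_sum summable_mult assms)
  also have "\<dots> = (\<Sum>a\<in>UNIV. \<Sum>s'\<in>UNIV. \<Sum>t. pol s $ a * P s a s' * g t s')"
    by (intro sum.cong refl suminf_sum summable_mult assms)
  also have "\<dots> = (\<Sum>a\<in>UNIV. \<Sum>s'\<in>UNIV. pol s $ a * P s a s' * (\<Sum>t. g t s'))"
    by (intro sum.cong refl suminf_mult assms)
  also have "\<dots> = Kop P pol (\<lambda>s'. \<Sum>t. g t s') s"
    by (simp add: Kop_def sum_distrib_left mult.assoc)
  finally show ?thesis .
qed

lemma summable_Kop:
  assumes "\<And>s'. summable (\<lambda>t. g t s')"
  shows "summable (\<lambda>t. Kop P pol (g t) s)"
  unfolding Kop_def by (intro summable_sum summable_mult assms)

context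
  fixes P :: "'s::finite \<Rightarrow> 'a::finite \<Rightarrow> 's \<Rightarrow> real" and pol :: "'s \<Rightarrow> real^'a"
  assumes trP: "is_transition P" and pp: "is_policy pol"
begin

lemma pol_nonneg: "0 \<le> pol s $ a"
  using pp unfolding is_policy_def prob_simplex_def by auto
lemma pol_sum: "(\<Sum>a\<in>UNIV. pol s $ a) = 1"
  using pp unfolding is_policy_def prob_simplex_def by auto
lemma P_nonneg: "0 \<le> P s a s'"
  using trP unfolding is_transition_def by auto
lemma P_sum: "(\<Sum>s'\<in>UNIV. P s a s') = 1"
  using trP unfolding is_transition_def by auto

lemma Kop_mono: "(\<And>s. f s \<le> g s) \<Longrightarrow> Kop P pol f s \<le> Kop P pol g s"
  unfolding Kop_def
  by (intro sum_mono mult_left_mono pol_nonneg) (auto intro: mult_left_mono P_nonneg)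

lemma Kop_const: "Kop P pol (\<lambda>_. c) s = c"
  by (simp add: Kop_def sum_distrib_right[symmetric] P_sum pol_sum flip: sum_distrib_left)

lemma Kpow_mono: "(\<And>s. f s \<le> g s) \<Longrightarrow> (Kop P pol ^^ t) f s \<le> (Kop P pol ^^ t) g s"
proof (induction t arbitrary: s)
  case (Suc t) then show ?case by (simp add: Kop_mono)
qed simp

lemma Kpow_const: "(Kop P pol ^^ t) (\<lambda>_. c) s = c"
proof (induction t arbitrary: s)
  case (Suc t)
  have "(Kop P pol ^^ t) (\<lambda>_. c) = (\<lambda>_. c)" using Suc by auto
  then show ?case by (simp add: Kop_const)
qed simp

lemma Kpow_add: "(Kop P pol ^^ t) (\<lambda>s. f s + g s) s = (Kop P pol ^^ t) f s + (Kop P pol ^^ t) g s"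
proof (induction t arbitrary: s)
  case (Suc t)
  have "(Kop P pol ^^ t) (\<lambda>s. f s + g s) = (\<lambda>s. (Kop P pol ^^ t) f s + (Kop P pol ^^ t) g s)"
    using Suc by auto
  then show ?case by (simp add: Kop_add)
qed simp

lemma Kpow_scale: "(Kop P pol ^^ t) (\<lambda>s. c * f s) s = c * (Kop P pol ^^ t) f s"
proof (induction t arbitrary: s)
  case (Suc t)
  have "(Kop P pol ^^ t) (\<lambda>s. c * f s) = (\<lambda>s. c * (Kop P pol ^^ t) f s)"
    using Suc by auto
  then show ?case by (simp add: Kop_scale)
qed simp

lemma Kpow_bound:
  assumes "\<And>s. \<bar>f s\<bar> \<le> B"
  shows "\<bar>(Kop P pol ^^ t) f s\<bar> \<le> B"
proof -
  have a1: "f s \<le> B" "- B \<le> f s" for s using assms[of s] by auto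
  have "(Kop P pol ^^ t) f s \<le> (Kop P pol ^^ t) (\<lambda>_. B) s"
    using a1 by (intro Kpow_mono)
  moreover have "(Kop P pol ^^ t) (\<lambda>_. -B) s \<le> (Kop P pol ^^ t) f s"
    using a1 by (intro Kpow_mono)
  ultimately show ?thesis by (simp add: Kpow_const)
qed

context
  fixes \<gamma> :: real
  assumes g0: "0 \<le> \<gamma>" and g1: "\<gamma> < 1"
begin

lemma fbound: "\<exists>B. \<forall>s. \<bar>(f::'s \<Rightarrow> real) s\<bar> \<le> B"
proof -
  have "\<forall>s. \<bar>f s\<bar> \<le> Max (range (\<lambda>s. \<bar>f s\<bar>))" by (intro allI Max_ge) simp_all
  then show ?thesis by blast
qed

lemma W_summable: "summable (\<lambda>t. \<gamma>^t * (Kop P pol ^^ t) f s)"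
proof -
  obtain B where B: "\<And>s. \<bar>f s\<bar> \<le> B" using fbound by blast
  show ?thesis
  proof (rule summable_comparison_test)
    have kb: "\<bar>(Kop P pol ^^ n) f s\<bar> \<le> B" for n using Kpow_bound B by blast
    show "\<exists>N. \<forall>n\<ge>N. norm (\<gamma>^n * (Kop P pol ^^ n) f s) \<le> B * \<gamma>^n"
    proof (intro exI[of _ 0] allI impI)
      fix n :: nat
      have "norm (\<gamma>^n * (Kop P pol ^^ n) f s) = \<gamma>^n * \<bar>(Kop P pol ^^ n) f s\<bar>"
        using g0 by (simp add: abs_mult)
      also have "\<dots> \<le> \<gamma>^n * B" by (rule mult_left_mono[OF kb]) (simp add: g0)
      finally show "norm (\<gamma>^n * (Kop P pol ^^ n) f s) \<le> B * \<gamma>^n" by (simp add: mult.commute)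
    qed
    have "summable (\<lambda>n. \<gamma>^n)" using g0 g1 by (intro summable_geometric) simp
    then show "summable (\<lambda>n. B * \<gamma>^n)" by (rule summable_mult)
  qed
qed

lemma Wop_add: "Wop P \<gamma> pol (\<lambda>s. f s + g s) s = Wop P \<gamma> pol f s + Wop P \<gamma> pol g s"
proof -
  have "Wop P \<gamma> pol (\<lambda>s. f s + g s) s = (\<Sum>t. \<gamma>^t * (Kop P pol ^^ t) f s + \<gamma>^t * (Kop P pol ^^ t) g s)"
    unfolding Wop_def by (simp only: Kpow_add distrib_left)
  also have "\<dots> = Wop P \<gamma> pol f s + Wop P \<gamma> pol g s"
    unfolding Wop_def by (rule suminf_add[symmetric]; rule W_summable)
  finally show ?thesis .
qed

lemma Wop_scale: "Wop P \<gamma> pol (\<lambda>s. c * f s) s = c * Wop P \<gamma> pol f s"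
proof -
  have "Wop P \<gamma> pol (\<lambda>s. c * f s) s = (\<Sum>t. c * (\<gamma>^t * (Kop P pol ^^ t) f s))"
    unfolding Wop_def by (simp only: Kpow_scale mult.left_commute)
  also have "\<dots> = c * Wop P \<gamma> pol f s"
    unfolding Wop_def by (rule suminf_mult; rule W_summable)
  finally show ?thesis .
qed

lemma Wop_diff: "Wop P \<gamma> pol (\<lambda>s. f s - g s) s = Wop P \<gamma> pol f s - Wop P \<gamma> pol g s"
proof -
  have "Wop P \<gamma> pol (\<lambda>s. f s - g s) s = Wop P \<gamma> pol (\<lambda>s. f s + (-1) * g s) s" by simp
  also have "\<dots> = Wop P \<gamma> pol f s + (-1) * Wop P \<gamma> pol g s" by (simp only: Wop_add Wop_scale)
  finally show ?thesis by simp
qed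

lemma Wop_mono:
  assumes "\<And>s. f s \<le> g s"
  shows "Wop P \<gamma> pol f s \<le> Wop P \<gamma> pol g s"
  unfolding Wop_def
proof (rule suminf_le)
  fix t
  have "(Kop P pol ^^ t) f s \<le> (Kop P pol ^^ t) g s" using assms by (rule Kpow_mono)
  then show "\<gamma>^t * (Kop P pol ^^ t) f s \<le> \<gamma>^t * (Kop P pol ^^ t) g s"
    by (rule mult_left_mono) (simp add: g0)
qed (rule W_summable)+

lemma Wop_const: "Wop P \<gamma> pol (\<lambda>_. c) s = c / (1 - \<gamma>)"
proof -
  have "Wop P \<gamma> pol (\<lambda>_. c) s = (\<Sum>t. c * \<gamma>^t)" unfolding Wop_def Kpow_const by (simp add: mult.commute)
  also have "\<dots> = c * (\<Sum>t. \<gamma>^t)" using g0 g1 by (intro suminf_mult summable_geometric) simp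
  also have "\<dots> = c / (1 - \<gamma>)" using g0 g1 by (subst suminf_geometric) auto
  finally show ?thesis .
qed

lemma Wop_fix: "Wop P \<gamma> pol f s = f s + \<gamma> * Kop P pol (Wop P \<gamma> pol f) s"
proof -
  have "Wop P \<gamma> pol f s = (\<Sum>t. \<gamma>^Suc t * (Kop P pol ^^ Suc t) f s) + f s"
    unfolding Wop_def by (subst suminf_split_head[OF W_summable]) simp
  also have "(\<Sum>t. \<gamma>^Suc t * (Kop P pol ^^ Suc t) f s) = (\<Sum>t. \<gamma> * Kop P pol (\<lambda>s'. \<gamma>^t * (Kop P pol ^^ t) f s') s)"
    by (simp add: Kop_scale mult.assoc)
  also have "\<dots> = \<gamma> * (\<Sum>t. Kop P pol (\<lambda>s'. \<gamma>^t * (Kop P pol ^^ t) f s') s)"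
    by (intro suminf_mult summable_Kop W_summable)
  also have "(\<Sum>t. Kop P pol (\<lambda>s'. \<gamma>^t * (Kop P pol ^^ t) f s') s) = Kop P pol (Wop P \<gamma> pol f) s"
    unfolding Wop_def by (rule Kop_suminf[OF W_summable])
  finally show ?thesis by simp
qed

end
end

lemma fix_unique:
  fixes P :: "'s::finite \<Rightarrow> 'a::finite \<Rightarrow> 's \<Rightarrow> real"
  assumes trP: "is_transition P" and pp: "is_policy pol" and g0: "0 \<le> \<gamma>" and g1: "\<gamma> < 1"
    and e1: "\<And>s. g s = f s + \<gamma> * Kop P pol g s"
    and e2: "\<And>s. g' s = f s + \<gamma> * Kop P pol g' s"
  shows "g s = g' s"
proof -
  define d where "d = (\<lambda>s. g s - g' s)"
  define B where "B = Max (range (\<lambda>s. \<bar>d s\<bar>))"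
  have dB: "\<bar>d s\<bar> \<le> B" for s unfolding B_def by simp
  have "d s = \<gamma> * Kop P pol d s" for s
    using e1[of s] e2[of s] by (simp add: d_def Kop_diff right_diff_distrib)
  moreover have "\<bar>Kop P pol d s\<bar> \<le> B" for s
    using Kpow_bound[OF trP pp, of d B 1] dB by simp
  ultimately have "\<bar>d s\<bar> \<le> \<gamma> * B" for s using g0 by (simp add: abs_mult mult_left_mono)
  then have "B \<le> \<gamma> * B" unfolding B_def by (simp add: Max_le_iff)
  moreover have "0 \<le> B" using dB[of s] by simp
  ultimately have "(1 - \<gamma>) * B \<le> 0" by (simp add: left_diff_distrib)
  then have "B \<le> 0" using g1 by (simp add: mult_le_0_iff)
  then show ?thesis using dB[of s] by (simp add: d_def)
qed

lemma dist_sum: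
  fixes P :: "'s::finite \<Rightarrow> 'a::finite \<Rightarrow> 's \<Rightarrow> real"
  shows "(\<Sum>s'\<in>UNIV. state_dist P pol mu t s' * f s') = (\<Sum>s'\<in>UNIV. mu s' * (Kop P pol ^^ t) f s')"
proof (induction t arbitrary: f)
  case (Suc t)
  have "(\<Sum>s''\<in>UNIV. state_dist P pol mu (Suc t) s'' * f s'')
      = (\<Sum>s''\<in>UNIV. \<Sum>s'\<in>UNIV. state_dist P pol mu t s' * (\<Sum>a\<in>UNIV. pol s' $ a * P s' a s'') * f s'')"
    by (simp add: sum_distrib_right)
  also have "\<dots> = (\<Sum>s'\<in>UNIV. \<Sum>s''\<in>UNIV. state_dist P pol mu t s' * (\<Sum>a\<in>UNIV. pol s' $ a * P s' a s'') * f s'')"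
    by (rule sum.swap)
  also have "\<dots> = (\<Sum>s'\<in>UNIV. state_dist P pol mu t s' * Kop P pol f s')"
  proof (rule sum.cong[OF refl])
    fix s'
    have "Kop P pol f s' = (\<Sum>a\<in>UNIV. \<Sum>s''\<in>UNIV. pol s' $ a * P s' a s'' * f s'')"
      unfolding Kop_def by (simp add: sum_distrib_left mult.assoc)
    also have "\<dots> = (\<Sum>s''\<in>UNIV. \<Sum>a\<in>UNIV. pol s' $ a * P s' a s'' * f s'')"
      by (rule sum.swap)
    also have "\<dots> = (\<Sum>s''\<in>UNIV. (\<Sum>a\<in>UNIV. pol s' $ a * P s' a s'') * f s'')"
      by (simp add: sum_distrib_right)
    finally have kk: "Kop P pol f s' = (\<Sum>s''\<in>UNIV. (\<Sum>a\<in>UNIV. pol s' $ a * P s' a s'') * f s'')" .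
    have "(\<Sum>s''\<in>UNIV. state_dist P pol mu t s' * (\<Sum>a\<in>UNIV. pol s' $ a * P s' a s'') * f s'')
       = (\<Sum>s''\<in>UNIV. state_dist P pol mu t s' * ((\<Sum>a\<in>UNIV. pol s' $ a * P s' a s'') * f s''))"
      by (simp only: mult.assoc)
    also have "\<dots> = state_dist P pol mu t s' * (\<Sum>s''\<in>UNIV. (\<Sum>a\<in>UNIV. pol s' $ a * P s' a s'') * f s'')"
      by (rule sum_distrib_left[symmetric])
    also have "\<dots> = state_dist P pol mu t s' * Kop P pol f s'" by (simp only: kk)
    finally show "(\<Sum>s''\<in>UNIV. state_dist P pol mu t s' * (\<Sum>a\<in>UNIV. pol s' $ a * P s' a s'') * f s'')
        = state_dist P pol mu t s' * Kop P pol f s'" .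
  qed
  also have "\<dots> = (\<Sum>s'\<in>UNIV. mu s' * (Kop P pol ^^ t) (Kop P pol f) s')" by (rule Suc)
  also have "\<dots> = (\<Sum>s'\<in>UNIV. mu s' * (Kop P pol ^^ Suc t) f s')"
    by (simp only: funpow_Suc_right o_def)
  finally show ?case .
qed simp

lemma delta_sum: "(\<Sum>s'\<in>(UNIV::'s::finite set). (if s' = s then 1 else 0) * (X s' :: real)) = X s"
proof -
  have "(\<Sum>s'\<in>(UNIV::'s set). (if s' = s then 1 else 0) * X s') = (\<Sum>s'\<in>(UNIV::'s set). if s' = s then X s else 0)"
    by (rule sum.cong) auto
  also have "\<dots> = X s" by simp
  finally show ?thesis .
qed


lemma Vfun_eq: "Vfun P c h \<gamma> pol s = Wop P \<gamma> pol (stage_cost c h pol) s"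
proof -
  have "\<And>t. (\<Sum>s'\<in>UNIV. state_dist P pol (\<lambda>x. if x = s then 1 else 0) t s' * stage_cost c h pol s')
     = (Kop P pol ^^ t) (stage_cost c h pol) s"
    by (simp only: dist_sum delta_sum)
  then show ?thesis unfolding Vfun_def Wop_def by simp
qed

lemma Qfun_eq:
  fixes P :: "'s::finite \<Rightarrow> 'a::finite \<Rightarrow> 's \<Rightarrow> real"
  assumes trP: "is_transition P" and pp: "is_policy pol" and g0: "0 \<le> \<gamma>" and g1: "\<gamma> < 1"
  shows "Qfun P c h \<gamma> pol s $ a = c s a + h s (pol s) + \<gamma> * (\<Sum>s'\<in>UNIV. P s a s' * Vfun P c h \<gamma> pol s')"
proof -
  let ?C = "stage_cost c h pol"
  have sm: "summable (\<lambda>t. \<gamma>^t * (Kop P pol ^^ t) ?C s')" for s'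
    by (rule W_summable[OF trP pp g0 g1])
  have "(\<Sum>t. \<gamma>^Suc t * (\<Sum>s'\<in>UNIV. state_dist P pol (P s a) t s' * ?C s'))
      = (\<Sum>t. \<gamma> * (\<Sum>s'\<in>UNIV. P s a s' * (\<gamma>^t * (Kop P pol ^^ t) ?C s')))"
    unfolding dist_sum by (simp only: sum_distrib_left power_Suc mult_ac)
  also have "\<dots> = \<gamma> * (\<Sum>t. (\<Sum>s'\<in>UNIV. P s a s' * (\<gamma>^t * (Kop P pol ^^ t) ?C s')))"
    by (intro suminf_mult summable_sum summable_mult sm)
  also have "(\<Sum>t. (\<Sum>s'\<in>UNIV. P s a s' * (\<gamma>^t * (Kop P pol ^^ t) ?C s')))
      = (\<Sum>s'\<in>UNIV. \<Sum>t. P s a s' * (\<gamma>^t * (Kop P pol ^^ t) ?C s'))"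
    by (intro suminf_sum summable_mult sm)
  also have "\<dots> = (\<Sum>s'\<in>UNIV. P s a s' * Vfun P c h \<gamma> pol s')"
    by (intro sum.cong refl) (simp add: suminf_mult sm Vfun_eq Wop_def)
  finally show ?thesis unfolding Qfun_def by simp
qed

definition psi :: "('s::finite \<Rightarrow> 'a::finite \<Rightarrow> 's \<Rightarrow> real) \<Rightarrow> ('s \<Rightarrow> 'a \<Rightarrow> real)
    \<Rightarrow> ('s \<Rightarrow> real ^ 'a \<Rightarrow> real) \<Rightarrow> real \<Rightarrow> ('s \<Rightarrow> real ^ 'a) \<Rightarrow> ('s \<Rightarrow> real ^ 'a) \<Rightarrow> 's \<Rightarrow> real" where
  "psi P c h \<gamma> pa q s = Qfun P c h \<gamma> pa s \<bullet> q s + h s (q s)"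

lemma psi_eq:
  fixes P :: "'s::finite \<Rightarrow> 'a::finite \<Rightarrow> 's \<Rightarrow> real"
  assumes trP: "is_transition P" and pp: "is_policy pa" and pq: "is_policy q" and g0: "0 \<le> \<gamma>" and g1: "\<gamma> < 1"
  shows "psi P c h \<gamma> pa q s = stage_cost c h q s + h s (pa s) + \<gamma> * Kop P q (Vfun P c h \<gamma> pa) s"
proof -
  have sq: "(\<Sum>a\<in>UNIV. q s $ a) = 1" using pol_sum[OF trP pq] .
  have "psi P c h \<gamma> pa q s = (\<Sum>a\<in>UNIV. (c s a + h s (pa s) + \<gamma> * (\<Sum>s'\<in>UNIV. P s a s' * Vfun P c h \<gamma> pa s')) * q s $ a) + h s (q s)"
    unfolding psi_def inner_vec_def by (simp add: Qfun_eq[OF trP pp g0 g1])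
  also have "\<dots> = (\<Sum>a\<in>UNIV. q s $ a * c s a) + h s (pa s) * (\<Sum>a\<in>UNIV. q s $ a)
      + \<gamma> * Kop P q (Vfun P c h \<gamma> pa) s + h s (q s)"
  proof -
    have "\<And>a. (c s a + h s (pa s) + \<gamma> * (\<Sum>s'\<in>UNIV. P s a s' * Vfun P c h \<gamma> pa s')) * q s $ a
        = q s $ a * c s a + h s (pa s) * q s $ a + \<gamma> * (q s $ a * (\<Sum>s'\<in>UNIV. P s a s' * Vfun P c h \<gamma> pa s'))"
      by (simp add: algebra_simps)
    then show ?thesis
      by (simp only: sum.distrib Kop_def sum_distrib_left[symmetric])
  qed
  finally show ?thesis unfolding stage_cost_def sq by simp
qed

lemma bellman:
  fixes P :: "'s::finite \<Rightarrow> 'a::finite \<Rightarrow> 's \<Rightarrow> real"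
  assumes trP: "is_transition P" and pp: "is_policy pa" and g0: "0 \<le> \<gamma>" and g1: "\<gamma> < 1"
  shows "Vfun P c h \<gamma> pa s = stage_cost c h pa s + \<gamma> * Kop P pa (Vfun P c h \<gamma> pa) s"
proof -
  have "Vfun P c h \<gamma> pa = Wop P \<gamma> pa (stage_cost c h pa)" by (rule ext) (rule Vfun_eq)
  then show ?thesis using Wop_fix[OF trP pp g0 g1] by simp
qed

lemma PDL:
  fixes P :: "'s::finite \<Rightarrow> 'a::finite \<Rightarrow> 's \<Rightarrow> real"
  assumes trP: "is_transition P" and pp: "is_policy pa" and pq: "is_policy p" and g0: "0 \<le> \<gamma>" and g1: "\<gamma> < 1"
  shows "Vfun P c h \<gamma> pa s - Vfun P c h \<gamma> p s
     = Wop P \<gamma> p (\<lambda>s'. psi P c h \<gamma> pa pa s' - psi P c h \<gamma> pa p s') s"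
proof -
  let ?V = "Vfun P c h \<gamma> pa" and ?Vp = "Vfun P c h \<gamma> p"
  define B where "B = (\<lambda>s'. psi P c h \<gamma> pa pa s' - psi P c h \<gamma> pa p s')"
  have B: "B s' = ?V s' - stage_cost c h p s' - \<gamma> * Kop P p ?V s'" for s'
    unfolding B_def psi_eq[OF trP pp pp g0 g1] psi_eq[OF trP pp pq g0 g1] bellman[OF trP pp g0 g1, of c h s']
    by simp
  have e1: "?V s' - ?Vp s' = B s' + \<gamma> * Kop P p (\<lambda>x. ?V x - ?Vp x) s'" for s'
    unfolding B Kop_diff right_diff_distrib using bellman[OF trP pq g0 g1, of c h s'] by linarith
  have e2: "Wop P \<gamma> p B s' = B s' + \<gamma> * Kop P p (Wop P \<gamma> p B) s'" for s'
    by (rule Wop_fix[OF trP pq g0 g1])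
  have "(\<lambda>x. ?V x - ?Vp x) s = Wop P \<gamma> p B s"
    by (rule fix_unique[OF trP pq g0 g1, where f=B, OF e1 e2])
  then show ?thesis unfolding B_def by simp
qed

lemma simplex_comb:
  assumes "y \<in> prob_simplex" "p \<in> prob_simplex" "0 \<le> l" "l \<le> 1"
  shows "(1 - l) *\<^sub>R y + l *\<^sub>R p \<in> prob_simplex"
proof -
  have "0 \<le> ((1 - l) *\<^sub>R y + l *\<^sub>R p) $ a" for a
    using assms unfolding prob_simplex_def by auto
  moreover have "(\<Sum>a\<in>UNIV. ((1 - l) *\<^sub>R y + l *\<^sub>R p) $ a) = 1"
    using assms unfolding prob_simplex_def
    by (simp add: sum.distrib sum_distrib_left[symmetric])
  ultimately show ?thesis unfolding prob_simplex_def by blast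
qed

lemma dgf_deriv_lower:
  fixes \<omega> :: "real ^ 'a::finite \<Rightarrow> real"
  assumes dgf: "is_dgf nrm \<omega> g\<omega>"
    and y: "y \<in> prob_simplex" and p: "p \<in> prob_simplex"
    and low: "\<And>l. 0 < l \<Longrightarrow> l \<le> 1 \<Longrightarrow> - K * l \<le> \<omega> ((1 - l) *\<^sub>R y + l *\<^sub>R p) - \<omega> y"
  shows "- K \<le> g\<omega> y \<bullet> (p - y)"
proof -
  define ln where "ln = (\<lambda>t::real. (1 - t) *\<^sub>R y + t *\<^sub>R p)"
  have ln0: "ln 0 = y" by (simp add: ln_def)
  have ln_eq: "ln = (\<lambda>t. y + t *\<^sub>R (p - y))"
    by (rule ext) (simp add: ln_def algebra_simps)
  have dln: "(ln has_derivative (\<lambda>t. t *\<^sub>R (p - y))) (at 0 within {0..1})"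
    unfolding ln_eq by (auto intro!: derivative_eq_intros)
  have img: "ln ` {0..1} \<subseteq> prob_simplex"
    using simplex_comb[OF y p] by (auto simp: ln_def)
  have dw: "(\<omega> has_derivative (\<lambda>v. g\<omega> y \<bullet> v)) (at (ln 0) within ln ` {0..1})"
    using dgf y unfolding is_dgf_def ln0 by (metis has_derivative_subset img)
  have "((\<omega> \<circ> ln) has_derivative ((\<lambda>v. g\<omega> y \<bullet> v) \<circ> (\<lambda>t. t *\<^sub>R (p - y)))) (at 0 within {0..1})"
    by (rule diff_chain_within[OF dln dw])
  moreover have "((\<lambda>v. g\<omega> y \<bullet> v) \<circ> (\<lambda>t. t *\<^sub>R (p - y))) = (*) (g\<omega> y \<bullet> (p - y))"
    by (rule ext) (simp add: inner_scaleR_right mult.commute)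
  ultimately have "((\<omega> \<circ> ln) has_field_derivative (g\<omega> y \<bullet> (p - y))) (at 0 within {0..1})"
    by (simp add: has_field_derivative_def)
  then have lim: "((\<lambda>t. ((\<omega> \<circ> ln) t - (\<omega> \<circ> ln) 0) / (t - 0)) \<longlongrightarrow> g\<omega> y \<bullet> (p - y)) (at 0 within {0..1})"
    by (simp add: has_field_derivative_iff)
  have ev: "eventually (\<lambda>t. - K \<le> ((\<omega> \<circ> ln) t - (\<omega> \<circ> ln) 0) / (t - 0)) (at (0::real) within {0..1})"
    unfolding eventually_at_filter
  proof (rule always_eventually, intro allI impI)
    fix t :: real assume "t \<noteq> 0" "t \<in> {0..1}"
    then have t: "0 < t" "t \<le> 1" by auto
    have "- K * t \<le> \<omega> (ln t) - \<omega> y" using low[OF t] by (simp add: ln_def)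
    then show "- K \<le> ((\<omega> \<circ> ln) t - (\<omega> \<circ> ln) 0) / (t - 0)"
      using t by (simp add: ln0 pos_le_divide_eq)
  qed
  have nb: "at (0::real) within {0..1} \<noteq> bot"
    by (simp add: at_within_Icc_at_right trivial_limit_at_right_real)
  show ?thesis by (rule tendsto_lowerbound[OF lim ev nb])
qed

lemma three_point:
  fixes \<omega> :: "real ^ 'a::finite \<Rightarrow> real" and hs :: "real ^ 'a \<Rightarrow> real"
  assumes dgf: "is_dgf nrm \<omega> g\<omega>"
    and hconv: "convex_on prob_simplex hs"
    and hstr: "\<forall>g. (\<forall>p\<in>prob_simplex. hs p \<ge> hs y + g \<bullet> (p - y)) \<longrightarrow>
         (\<forall>p\<in>prob_simplex. hs p - hs y - g \<bullet> (p - y) \<ge> \<mu> * bregman \<omega> g\<omega> p y)"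
    and eta: "\<eta> > 0" and x: "x \<in> prob_simplex" and y: "y \<in> prob_simplex"
    and opt: "\<forall>p\<in>prob_simplex. \<eta> * (q \<bullet> y + hs y) + bregman \<omega> g\<omega> y x \<le> \<eta> * (q \<bullet> p + hs p) + bregman \<omega> g\<omega> p x"
    and p: "p \<in> prob_simplex"
  shows "\<eta> * (q \<bullet> y + hs y) + bregman \<omega> g\<omega> y x + (1 + \<eta> * \<mu>) * bregman \<omega> g\<omega> p y
     \<le> \<eta> * (q \<bullet> p + hs p) + bregman \<omega> g\<omega> p x"
proof -
  define g where "g = (1 / \<eta>) *\<^sub>R (g\<omega> x - g\<omega> y - \<eta> *\<^sub>R q)"
  have sub: "hs p' \<ge> hs y + g \<bullet> (p' - y)" if p': "p' \<in> prob_simplex" for p'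
  proof -
    define K where "K = \<eta> * (q \<bullet> (p' - y)) - g\<omega> x \<bullet> (p' - y) + \<eta> * (hs p' - hs y)"
    have "- K * l \<le> \<omega> ((1 - l) *\<^sub>R y + l *\<^sub>R p') - \<omega> y" if l: "0 < l" "l \<le> 1" for l
    proof -
      let ?z = "(1 - l) *\<^sub>R y + l *\<^sub>R p'"
      have z: "?z \<in> prob_simplex" using simplex_comb[OF y p'] l by simp
      have zy: "?z - y = l *\<^sub>R (p' - y)" by (simp add: algebra_simps)
      have "\<eta> * (q \<bullet> y + hs y) + bregman \<omega> g\<omega> y x \<le> \<eta> * (q \<bullet> ?z + hs ?z) + bregman \<omega> g\<omega> ?z x"
        using opt z by blast
      then have A: "0 \<le> \<eta> * (q \<bullet> (?z - y)) + \<eta> * (hs ?z - hs y) + \<omega> ?z - \<omega> y - g\<omega> x \<bullet> (?z - y)"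
        unfolding bregman_def by (simp add: algebra_simps inner_diff_right)
      have "hs ?z \<le> (1 - l) * hs y + l * hs p'"
        using convex_onD[OF hconv, of l y p'] l y p' by simp
      then have "\<eta> * (hs ?z - hs y) \<le> \<eta> * (l * (hs p' - hs y))"
        using eta by (intro mult_left_mono) (auto simp: algebra_simps)
      with A show ?thesis unfolding zy K_def
        by (simp add: inner_scaleR_right algebra_simps)
    qed
    then have "- K \<le> g\<omega> y \<bullet> (p' - y)" by (rule dgf_deriv_lower[OF dgf y p'])
    then have "\<eta> * (g \<bullet> (p' - y)) \<le> \<eta> * (hs p' - hs y)"
      unfolding g_def K_def using eta by (simp add: inner_diff_left inner_scaleR_left algebra_simps)
    then show ?thesis using eta by simp
  qed
  have str: "hs p - hs y - g \<bullet> (p - y) \<ge> \<mu> * bregman \<omega> g\<omega> p y"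
    using hstr sub p by blast
  have key: "\<eta> * (q \<bullet> p + hs p) + bregman \<omega> g\<omega> p x - (\<eta> * (q \<bullet> y + hs y) + bregman \<omega> g\<omega> y x)
      = \<eta> * (hs p - hs y - g \<bullet> (p - y)) + bregman \<omega> g\<omega> p y"
    unfolding g_def bregman_def using eta
    by (simp add: inner_diff_left inner_diff_right inner_scaleR_left algebra_simps)
  have "\<eta> * (\<mu> * bregman \<omega> g\<omega> p y) \<le> \<eta> * (hs p - hs y - g \<bullet> (p - y))"
    using str eta by (intro mult_left_mono) auto
  then show ?thesis using key by (simp add: algebra_simps)
qed

lemma sq_bound:
  fixes a b r e :: real
  assumes "e > 0"
  shows "(a + b) * r - r\<^sup>2 / (2 * e) \<le> e * (a\<^sup>2 + b\<^sup>2)"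
proof -
  have id: "2 * e * (e * (a\<^sup>2 + b\<^sup>2) - (a + b) * r) + r\<^sup>2 = (r - e * (a + b))\<^sup>2 + e\<^sup>2 * (a - b)\<^sup>2"
    by (simp add: power2_eq_square algebra_simps)
  have "0 \<le> (r - e * (a + b))\<^sup>2 + e\<^sup>2 * (a - b)\<^sup>2" by simp
  then have "0 \<le> 2 * e * (e * (a\<^sup>2 + b\<^sup>2) - (a + b) * r) + r\<^sup>2" using id by simp
  then have "0 \<le> (2 * e * (e * (a\<^sup>2 + b\<^sup>2) - (a + b) * r) + r\<^sup>2) / (2 * e)" using assms by simp
  also have "\<dots> = e * (a\<^sup>2 + b\<^sup>2) - ((a + b) * r - r\<^sup>2 / (2 * e))"
    using assms by (simp add: field_simps)
  finally show ?thesis by simp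
qed

lemma state_step:
  fixes \<omega> :: "real ^ 'a::finite \<Rightarrow> real" and hs :: "real ^ 'a \<Rightarrow> real"
  assumes N: "is_norm_fn nrm"
    and dgf: "is_dgf nrm \<omega> g\<omega>"
    and hconv: "convex_on prob_simplex hs"
    and hstr: "\<forall>g. (\<forall>p\<in>prob_simplex. hs p \<ge> hs y + g \<bullet> (p - y)) \<longrightarrow>
         (\<forall>p\<in>prob_simplex. hs p - hs y - g \<bullet> (p - y) \<ge> \<mu> * bregman \<omega> g\<omega> p y)"
    and hlip: "hs x - hs y \<le> Mh * nrm (x - y)"
    and eta: "\<eta> > 0" and x: "x \<in> prob_simplex" and y: "y \<in> prob_simplex"
    and opt: "\<forall>p\<in>prob_simplex. \<eta> * (q \<bullet> y + hs y) + bregman \<omega> g\<omega> y x \<le> \<eta> * (q \<bullet> p + hs p) + bregman \<omega> g\<omega> p x"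
    and p: "p \<in> prob_simplex"
  shows "(Q \<bullet> x + hs x) - (Q \<bullet> p + hs p)
     \<le> (1 / \<eta>) * bregman \<omega> g\<omega> p x - (1 / \<eta> + \<mu>) * bregman \<omega> g\<omega> p y
       + \<eta> * ((dual_norm nrm q)\<^sup>2 + Mh\<^sup>2) + (Q - q) \<bullet> (x - p)"
proof -
  have tp: "\<eta> * (q \<bullet> y + hs y) + bregman \<omega> g\<omega> y x + (1 + \<eta> * \<mu>) * bregman \<omega> g\<omega> p y
     \<le> \<eta> * (q \<bullet> p + hs p) + bregman \<omega> g\<omega> p x"
    by (rule three_point[OF dgf hconv hstr eta x y opt p])
  then have first: "q \<bullet> y + hs y - (q \<bullet> p + hs p)
     \<le> (1 / \<eta>) * (bregman \<omega> g\<omega> p x - bregman \<omega> g\<omega> y x - (1 + \<eta> * \<mu>) * bregman \<omega> g\<omega> p y)"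
    using eta by (simp add: field_simps)
  define r where "r = nrm (x - y)"
  have sc: "bregman \<omega> g\<omega> y x \<ge> (1/2) * r\<^sup>2"
    using dgf x y unfolding is_dgf_def r_def by (metis nrm_minus_commute[OF N])
  have h1: "q \<bullet> (x - y) \<le> dual_norm nrm q * r" unfolding r_def by (rule holder[OF N])
  have second: "q \<bullet> (x - y) + hs x - hs y - bregman \<omega> g\<omega> y x / \<eta> \<le> \<eta> * ((dual_norm nrm q)\<^sup>2 + Mh\<^sup>2)"
  proof -
    have "bregman \<omega> g\<omega> y x / \<eta> \<ge> r\<^sup>2 / (2 * \<eta>)" using sc eta by (simp add: field_simps)
    moreover have "q \<bullet> (x - y) + hs x - hs y \<le> (dual_norm nrm q + Mh) * r"
      using h1 hlip unfolding r_def by (simp add: algebra_simps)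
    ultimately show ?thesis using sq_bound[OF eta, of "dual_norm nrm q" Mh r] by linarith
  qed
  have dec: "(Q \<bullet> x + hs x) - (Q \<bullet> p + hs p)
      = (q \<bullet> y + hs y - (q \<bullet> p + hs p)) + (q \<bullet> (x - y) + hs x - hs y) + (Q - q) \<bullet> (x - p)"
    by (simp add: inner_diff_left inner_diff_right algebra_simps)
  have "(1 / \<eta>) * (bregman \<omega> g\<omega> p x - bregman \<omega> g\<omega> y x - (1 + \<eta> * \<mu>) * bregman \<omega> g\<omega> p y)
      = (1 / \<eta>) * bregman \<omega> g\<omega> p x - (1 / \<eta> + \<mu>) * bregman \<omega> g\<omega> p y - bregman \<omega> g\<omega> y x / \<eta>"
    using eta by (simp add: field_simps)
  then show ?thesis using dec first second by linarith
qed

lemma Wop_lin: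
  fixes P :: "'s::finite \<Rightarrow> 'a::finite \<Rightarrow> 's \<Rightarrow> real"
  assumes trP: "is_transition P" and pp: "is_policy pol" and g0: "0 \<le> \<gamma>" and g1: "\<gamma> < 1"
  shows "Wop P \<gamma> pol (\<lambda>s'. A * f1 s' - B * f2 s' + C * f3 s' + f4 s') s
     = A * Wop P \<gamma> pol f1 s - B * Wop P \<gamma> pol f2 s + C * Wop P \<gamma> pol f3 s + Wop P \<gamma> pol f4 s"
proof -
  note W = Wop_add[OF trP pp g0 g1] Wop_diff[OF trP pp g0 g1] Wop_scale[OF trP pp g0 g1]
  have "Wop P \<gamma> pol (\<lambda>s'. A * f1 s' - B * f2 s' + C * f3 s' + f4 s') s
      = Wop P \<gamma> pol (\<lambda>s'. A * f1 s' - B * f2 s' + C * f3 s') s + Wop P \<gamma> pol f4 s" by (rule W(1))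
  also have "Wop P \<gamma> pol (\<lambda>s'. A * f1 s' - B * f2 s' + C * f3 s') s
      = Wop P \<gamma> pol (\<lambda>s'. A * f1 s' - B * f2 s') s + Wop P \<gamma> pol (\<lambda>s'. C * f3 s') s" by (rule W(1))
  also have "Wop P \<gamma> pol (\<lambda>s'. A * f1 s' - B * f2 s') s
      = Wop P \<gamma> pol (\<lambda>s'. A * f1 s') s - Wop P \<gamma> pol (\<lambda>s'. B * f2 s') s" by (rule W(2))
  finally show ?thesis by (simp only: W(3))
qed

lemma Wop_nonneg:
  fixes P :: "'s::finite \<Rightarrow> 'a::finite \<Rightarrow> 's \<Rightarrow> real"
  assumes trP: "is_transition P" and pp: "is_policy pol" and g0: "0 \<le> \<gamma>" and g1: "\<gamma> < 1"
    and "\<And>s. 0 \<le> f s"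
  shows "0 \<le> Wop P \<gamma> pol f s"
  using Wop_mono[OF trP pp g0 g1, of "\<lambda>_. 0" f s] Wop_const[OF trP pp g0 g1, of 0 s] assms(5) by simp

lemma bregman_nonneg:
  assumes "is_dgf nrm \<omega> g\<omega>" "is_norm_fn nrm" "p \<in> prob_simplex" "x \<in> prob_simplex"
  shows "0 \<le> bregman \<omega> g\<omega> p x"
proof -
  have "(1/2) * (nrm (p - x))\<^sup>2 \<le> bregman \<omega> g\<omega> p x" using assms unfolding is_dgf_def by blast
  moreover have "0 \<le> (1/2) * (nrm (p - x))\<^sup>2" by simp
  ultimately show ?thesis by linarith
qed

lemma dn_le_dnF: "dual_norm nrm (F s) \<le> dual_normF nrm (F :: 's::finite \<Rightarrow> real^'a::finite)"
  unfolding dual_normF_def by (rule Max_ge) auto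

lemma telescope:
  fixes V E a X :: "nat \<Rightarrow> real"
  assumes step: "\<And>t. m \<le> t \<Longrightarrow> V t \<le> a t * X t - a (Suc t) * X (Suc t) + E t"
    and nn: "\<And>t. 0 \<le> a t * X t"
    and mn: "m \<le> n"
  shows "(\<Sum>t\<in>{m..<n}. V t) \<le> a m * X m + (\<Sum>t\<in>{m..<n}. E t)"
proof -
  have "(\<Sum>t\<in>{m..<m + d}. V t) + a (m + d) * X (m + d) \<le> a m * X m + (\<Sum>t\<in>{m..<m + d}. E t)" for d
  proof (induction d)
    case (Suc d)
    have "V (m + d) \<le> a (m + d) * X (m + d) - a (Suc (m + d)) * X (Suc (m + d)) + E (m + d)"
      by (rule step) simp
    then show ?case using Suc by simp
  qed simp
  from this[of "n - m"] nn[of n] mn show ?thesis by simp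
qed

locale spmd_det =
  fixes P :: "'s::finite \<Rightarrow> 'a::finite \<Rightarrow> 's \<Rightarrow> real"
    and c :: "'s \<Rightarrow> 'a \<Rightarrow> real" and \<gamma> :: real
    and nrm :: "real ^ 'a \<Rightarrow> real" and \<omega> :: "real ^ 'a \<Rightarrow> real" and g\<omega> :: "real ^ 'a \<Rightarrow> real ^ 'a"
    and h :: "'s \<Rightarrow> real ^ 'a \<Rightarrow> real" and \<mu> Mh :: real
  assumes trP: "is_transition P" and g0: "0 \<le> \<gamma>" and g1: "\<gamma> < 1"
    and N: "is_norm_fn nrm" and dgf: "is_dgf nrm \<omega> g\<omega>" and reg: "regularizer_ok \<omega> g\<omega> h \<mu>"
    and lip: "\<forall>s. \<forall>p\<in>prob_simplex. \<forall>p'\<in>prob_simplex. h s p - h s p' \<le> Mh * nrm (p - p')"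
begin

lemma mu_nonneg: "0 \<le> \<mu>" using reg unfolding regularizer_ok_def by blast

lemma value_step:
  assumes pt: "is_policy pt" and pt1: "is_policy pt1" and pp: "is_policy p"
    and opt: "\<forall>s. \<forall>q\<in>prob_simplex. \<eta> * (qt s \<bullet> pt1 s + h s (pt1 s)) + bregman \<omega> g\<omega> (pt1 s) (pt s)
          \<le> \<eta> * (qt s \<bullet> q + h s q) + bregman \<omega> g\<omega> q (pt s)"
    and eta: "\<eta> > 0"
  shows "Vfun P c h \<gamma> pt s0 - Vfun P c h \<gamma> p s0
     \<le> (1 / \<eta>) * Wop P \<gamma> p (\<lambda>s'. bregman \<omega> g\<omega> (p s') (pt s')) s0
       - (1 / \<eta> + \<mu>) * Wop P \<gamma> p (\<lambda>s'. bregman \<omega> g\<omega> (p s') (pt1 s')) s0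
       + \<eta> * ((dual_normF nrm qt)\<^sup>2 + Mh\<^sup>2) / (1 - \<gamma>)
       + Wop P \<gamma> p (\<lambda>s'. (Qfun P c h \<gamma> pt s' - qt s') \<bullet> (pt s' - p s')) s0"
proof -
  have inS: "pt s \<in> prob_simplex" "pt1 s \<in> prob_simplex" "p s \<in> prob_simplex" for s
    using pt pt1 pp unfolding is_policy_def by auto
  have pw: "psi P c h \<gamma> pt pt s' - psi P c h \<gamma> pt p s'
      \<le> (1 / \<eta>) * bregman \<omega> g\<omega> (p s') (pt s') - (1 / \<eta> + \<mu>) * bregman \<omega> g\<omega> (p s') (pt1 s')
        + \<eta> * ((dual_normF nrm qt)\<^sup>2 + Mh\<^sup>2) + (Qfun P c h \<gamma> pt s' - qt s') \<bullet> (pt s' - p s')" for s'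
  proof -
    have hconv: "convex_on prob_simplex (h s')" using reg unfolding regularizer_ok_def by blast
    have hstr: "\<forall>g. (\<forall>q\<in>prob_simplex. h s' q \<ge> h s' (pt1 s') + g \<bullet> (q - pt1 s')) \<longrightarrow>
         (\<forall>q\<in>prob_simplex. h s' q - h s' (pt1 s') - g \<bullet> (q - pt1 s') \<ge> \<mu> * bregman \<omega> g\<omega> q (pt1 s'))"
      using reg inS(2)[of s'] unfolding regularizer_ok_def by blast
    have hlip: "h s' (pt s') - h s' (pt1 s') \<le> Mh * nrm (pt s' - pt1 s')" using lip inS by blast
    have optS: "\<forall>q\<in>prob_simplex. \<eta> * (qt s' \<bullet> pt1 s' + h s' (pt1 s')) + bregman \<omega> g\<omega> (pt1 s') (pt s')
          \<le> \<eta> * (qt s' \<bullet> q + h s' q) + bregman \<omega> g\<omega> q (pt s')" using opt by blast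
    have "psi P c h \<gamma> pt pt s' - psi P c h \<gamma> pt p s'
      \<le> (1 / \<eta>) * bregman \<omega> g\<omega> (p s') (pt s') - (1 / \<eta> + \<mu>) * bregman \<omega> g\<omega> (p s') (pt1 s')
        + \<eta> * ((dual_norm nrm (qt s'))\<^sup>2 + Mh\<^sup>2) + (Qfun P c h \<gamma> pt s' - qt s') \<bullet> (pt s' - p s')"
      unfolding psi_def
      by (rule state_step[OF N dgf hconv hstr hlip eta inS(1) inS(2) optS inS(3)])
    moreover have "(dual_norm nrm (qt s'))\<^sup>2 \<le> (dual_normF nrm qt)\<^sup>2"
      using dn_le_dnF[of nrm qt s'] dn_nonneg[OF N, of "qt s'"] by (simp add: power_mono)
    ultimately show ?thesis using eta by (smt (verit) mult_left_mono)
  qed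
  have "Vfun P c h \<gamma> pt s0 - Vfun P c h \<gamma> p s0 = Wop P \<gamma> p (\<lambda>s'. psi P c h \<gamma> pt pt s' - psi P c h \<gamma> pt p s') s0"
    by (rule PDL[OF trP pt pp g0 g1])
  also have "\<dots> \<le> Wop P \<gamma> p (\<lambda>s'. (1 / \<eta>) * bregman \<omega> g\<omega> (p s') (pt s') - (1 / \<eta> + \<mu>) * bregman \<omega> g\<omega> (p s') (pt1 s')
        + \<eta> * (\<lambda>_. (dual_normF nrm qt)\<^sup>2 + Mh\<^sup>2) s' + (\<lambda>s'. (Qfun P c h \<gamma> pt s' - qt s') \<bullet> (pt s' - p s')) s') s0"
    by (rule Wop_mono[OF trP pp g0 g1]) (use pw in simp)
  also have "\<dots> = (1 / \<eta>) * Wop P \<gamma> p (\<lambda>s'. bregman \<omega> g\<omega> (p s') (pt s')) s0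
       - (1 / \<eta> + \<mu>) * Wop P \<gamma> p (\<lambda>s'. bregman \<omega> g\<omega> (p s') (pt1 s')) s0
       + \<eta> * Wop P \<gamma> p (\<lambda>_. (dual_normF nrm qt)\<^sup>2 + Mh\<^sup>2) s0
       + Wop P \<gamma> p (\<lambda>s'. (Qfun P c h \<gamma> pt s' - qt s') \<bullet> (pt s' - p s')) s0"
    by (rule Wop_lin[OF trP pp g0 g1])
  finally show ?thesis by (simp add: Wop_const[OF trP pp g0 g1])
qed

lemma X_nonneg:
  assumes "is_policy p" "is_policy q"
  shows "0 \<le> Wop P \<gamma> p (\<lambda>s'. bregman \<omega> g\<omega> (p s') (q s')) s0"
  using assms by (intro Wop_nonneg[OF trP _ g0 g1] bregman_nonneg[OF dgf N]) (auto simp: is_policy_def)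

lemma window:
  assumes pols: "\<forall>t. is_policy (polseq t)" and pp: "is_policy p"
    and opt: "\<forall>t s. \<forall>q\<in>prob_simplex. \<eta> t * (qt t s \<bullet> polseq (Suc t) s + h s (polseq (Suc t) s)) + bregman \<omega> g\<omega> (polseq (Suc t) s) (polseq t s)
          \<le> \<eta> t * (qt t s \<bullet> q + h s q) + bregman \<omega> g\<omega> q (polseq t s)"
    and eta: "\<forall>t. \<eta> t > 0" and amono: "\<forall>t. 1 / \<eta> (Suc t) \<le> 1 / \<eta> t + \<mu>" and mn: "m \<le> n"
  shows "(\<Sum>t\<in>{m..<n}. Vfun P c h \<gamma> (polseq t) s0 - Vfun P c h \<gamma> p s0)
     \<le> (1 / \<eta> m) * Wop P \<gamma> p (\<lambda>s'. bregman \<omega> g\<omega> (p s') (polseq m s')) s0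
       + (\<Sum>t\<in>{m..<n}. \<eta> t * ((dual_normF nrm (qt t))\<^sup>2 + Mh\<^sup>2) / (1 - \<gamma>)
            + Wop P \<gamma> p (\<lambda>s'. (Qfun P c h \<gamma> (polseq t) s' - qt t s') \<bullet> (polseq t s' - p s')) s0)"
proof (rule telescope[where a="\<lambda>t. 1 / \<eta> t" and X="\<lambda>t. Wop P \<gamma> p (\<lambda>s'. bregman \<omega> g\<omega> (p s') (polseq t s')) s0"])
  fix t
  let ?X = "\<lambda>t. Wop P \<gamma> p (\<lambda>s'. bregman \<omega> g\<omega> (p s') (polseq t s')) s0"
  have X0: "0 \<le> ?X t" for t using X_nonneg pp pols by blast
  show "0 \<le> 1 / \<eta> t * ?X t" using X0 eta by (simp add: less_imp_le)
  have vs: "Vfun P c h \<gamma> (polseq t) s0 - Vfun P c h \<gamma> p s0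
     \<le> (1 / \<eta> t) * ?X t - (1 / \<eta> t + \<mu>) * ?X (Suc t)
       + \<eta> t * ((dual_normF nrm (qt t))\<^sup>2 + Mh\<^sup>2) / (1 - \<gamma>)
       + Wop P \<gamma> p (\<lambda>s'. (Qfun P c h \<gamma> (polseq t) s' - qt t s') \<bullet> (polseq t s' - p s')) s0"
    by (rule value_step[OF _ _ pp]) (use pols opt eta in auto)
  have "1 / \<eta> (Suc t) * ?X (Suc t) \<le> (1 / \<eta> t + \<mu>) * ?X (Suc t)"
    using amono X0 by (intro mult_right_mono) auto
  then show "Vfun P c h \<gamma> (polseq t) s0 - Vfun P c h \<gamma> p s0
     \<le> 1 / \<eta> t * ?X t - 1 / \<eta> (Suc t) * ?X (Suc t)
       + (\<eta> t * ((dual_normF nrm (qt t))\<^sup>2 + Mh\<^sup>2) / (1 - \<gamma>)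
       + Wop P \<gamma> p (\<lambda>s'. (Qfun P c h \<gamma> (polseq t) s' - qt t s') \<bullet> (polseq t s' - p s')) s0)"
    using vs by linarith
qed (rule mn)

end

lemma aux_frac: fixes a b N :: real assumes "N > 0"
  shows "a / N = (a + b) / (N + 1) + (a + b - (N + 1) * b) / (N * (N + 1))"
proof -
  have p: "N + 1 > 0" "N * (N + 1) > 0" using assms by auto
  have "(a + b) / (N + 1) = N * (a + b) / (N * (N + 1))" using assms p by simp
  then have "(a + b) / (N + 1) + (a + b - (N + 1) * b) / (N * (N + 1)) = (N * (a + b) + (a + b - (N + 1) * b)) / (N * (N + 1))"
    by (simp add: add_divide_distrib)
  also have "N * (a + b) + (a + b - (N + 1) * b) = (N + 1) * a" by (simp add: algebra_simps)
  also have "(N + 1) * a / (N * (N + 1)) = a / N" using p by simp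
  finally show ?thesis by simp
qed

lemma last_iter_r:
  fixes r :: "nat \<Rightarrow> real"
  assumes "n \<ge> 1"
  shows "r 0 = (\<Sum>i<n. r i) / n + (\<Sum>j\<in>{1..<n}. (\<Sum>i\<le>j. r i - r j) / (real j * (real j + 1)))"
  using assms
proof (induction n rule: dec_induct)
  case base then show ?case by simp
next
  case (step n)
  have ins: "{..n} = insert n {..<n}" by auto
  have e: "(\<Sum>i\<le>n. r i - r n) = (\<Sum>i<n. r i) + r n - (real n + 1) * r n"
    unfolding sum_subtractf ins by (simp add: algebra_simps)
  have aux: "a / n = (a + b) / (real n + 1) + (a + b - (real n + 1) * b) / (real n * (real n + 1))" for a b :: real
    using aux_frac[of "real n" a b] step(1) by simp
  have "(\<Sum>i<n. r i) / n = (\<Sum>i<Suc n. r i) / (Suc n) + (\<Sum>i\<le>n. r i - r n) / (real n * (real n + 1))"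
    unfolding e using aux[of "\<Sum>i<n. r i" "r n"] by simp
  moreover have "(\<Sum>j\<in>{1..<Suc n}. (\<Sum>i\<le>j. r i - r j) / (real j * (real j + 1)))
      = (\<Sum>j\<in>{1..<n}. (\<Sum>i\<le>j. r i - r j) / (real j * (real j + 1))) + (\<Sum>i\<le>n. r i - r n) / (real n * (real n + 1))"
    using step(1) by (rule sum.atLeastLessThan_Suc)
  ultimately show ?case using step(3) by linarith
qed

lemma last_iter:
  fixes v :: "nat \<Rightarrow> real"
  assumes k: "k \<ge> 1"
  shows "v (k - 1) = (\<Sum>t\<in>{0..<k}. v t) / k
     + (\<Sum>j\<in>{1..<k}. (\<Sum>t\<in>{k - 1 - j..<k}. v t - v (k - 1 - j)) / (real j * (real j + 1)))"
proof -
  define r where "r i = v (k - Suc i)" for i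
  have A: "r 0 = (\<Sum>i<k. r i) / k + (\<Sum>j\<in>{1..<k}. (\<Sum>i\<le>j. r i - r j) / (real j * (real j + 1)))"
    by (rule last_iter_r[OF k])
  have B: "(\<Sum>i<k. r i) = (\<Sum>t\<in>{0..<k}. v t)"
    unfolding r_def atLeast0LessThan by (rule sum.nat_diff_reindex)
  have inner: "(\<Sum>i\<le>j. r i - r j) = (\<Sum>t\<in>{k - 1 - j..<k}. v t - v (k - 1 - j))" if j: "j \<in> {1..<k}" for j
    unfolding r_def
  proof (rule sum.reindex_bij_witness[of _ "\<lambda>t. k - 1 - t" "\<lambda>i. k - 1 - i"])
    fix a assume a: "a \<in> {..j}"
    then have a': "a \<le> j" by simp
    show "k - 1 - (k - 1 - a) = a" using a' j by simp
    show "k - 1 - a \<in> {k - 1 - j..<k}" using a' j by simp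
    show "v (k - 1 - a) - v (k - 1 - j) = v (k - Suc a) - v (k - Suc j)" by (simp add: diff_diff_left)
  next
    fix b assume b: "b \<in> {k - 1 - j..<k}"
    then have b': "k - 1 - j \<le> b" "b < k" by simp_all
    show "k - 1 - (k - 1 - b) = b" using b' by simp
    show "k - 1 - b \<in> {..j}" using b' j by simp
  qed
  have C: "(\<Sum>j\<in>{1..<k}. (\<Sum>i\<le>j. r i - r j) / (real j * (real j + 1)))
      = (\<Sum>j\<in>{1..<k}. (\<Sum>t\<in>{k - 1 - j..<k}. v t - v (k - 1 - j)) / (real j * (real j + 1)))"
    by (rule sum.cong[OF refl]) (simp only: inner)
  have D: "r 0 = v (k - 1)" unfolding r_def by simp
  show ?thesis unfolding D[symmetric] B[symmetric] C[symmetric] by (rule A)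
qed

lemma harm_upper: "harm (Suc n) \<le> 13/22 + ln (real n + 2) - 1 / (2 * (real n + 2))"
proof -
  have a: "ln (real n + 2) = ln (2 + real n)" "1 / (2 * (real n + 2)) = 1 / (4 + 2 * real n)"
    by (simp_all add: add.commute)
  show ?thesis using euler_mascheroni_lower[of n] euler_mascheroni_less_13_over_22 unfolding a by simp
qed

lemma harm_bound1:
  assumes k: "k \<ge> 1"
  shows "1 + harm (k - 1) \<le> 2 * ln (2 * real k)"
proof (cases "k = 1")
  case True then show ?thesis using ln2_ge_two_thirds by (simp add: harm_expand)
next
  case False
  then obtain n where n: "k = Suc (Suc n)" using k by (metis One_nat_def Suc_le_D not0_implies_Suc)
  have "harm (k - 1) \<le> 13/22 + ln (real n + 2) - 1 / (2 * (real n + 2))" using harm_upper[of n] n by simp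
  moreover have "real n + 2 = real k" using n by simp
  ultimately have h: "harm (k - 1) \<le> 13/22 + ln (real k) - 1 / (2 * real k)" by simp
  have "0 \<le> 1 / (2 * real k)" by simp
  with h have "harm (k - 1) \<le> 13/22 + ln (real k)" by linarith
  moreover have "ln (2 * real k) = ln 2 + ln (real k)" using k by (simp add: ln_mult)
  moreover have "ln 2 \<le> ln (real k)" using n by simp
  ultimately show ?thesis using ln2_ge_two_thirds by linarith
qed

lemma lin_aux:
  fixes X L1 L2 d1 d2 :: real
  assumes "X \<le> L2 - L1" "39/22 - 3 * d1 - d2 \<le> X * 3"
  shows "3 * (13/22 + L1 - d1) - d2 \<le> 3 * L2"
proof -
  have "39/22 + 3 * L1 - 3 * d1 - d2 \<le> 3 * L2" using assms by linarith
  moreover have "3 * (13/22 + L1 - d1) - d2 = 39/22 + 3 * L1 - 3 * d1 - d2" by (simp add: algebra_simps)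
  ultimately show ?thesis by simp
qed

lemma harm_bound2:
  assumes k: "k \<ge> 1"
  shows "harm k + 2 * harm (k - 1) \<le> 3 * ln (2 * real k)"
proof (cases "k = 1")
  case True then show ?thesis using ln2_ge_two_thirds by (simp add: harm_expand)
next
  case False
  then have k2: "real k \<ge> 2" using k by simp
  obtain n where n: "k = Suc n" using k by (metis Suc_le_D One_nat_def)
  have hk: "harm k = harm (k - 1) + 1 / real k" using n by (simp add: harm_Suc inverse_eq_divide)
  have hu: "harm k \<le> 13/22 + ln (real k + 1) - 1 / (2 * (real k + 1))"
    using harm_upper[of n] n by (simp add: add.commute)
  have lnk: "ln (2 * real k) - ln (real k + 1) \<ge> 2 * (2 * real k - (real k + 1)) / ((real k + 1) + 2 * real k)"
    using ln_inverse_approx_ge[of "real k + 1" "2 * real k"] k2 by simp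
  have poly: "39/22 - 3 / (2 * (real k + 1)) - 2 / real k \<le> 2 * (2 * real k - (real k + 1)) / ((real k + 1) + 2 * real k) * 3"
  proof -
    have c: "2 * (2 * real k - (real k + 1)) / ((real k + 1) + 2 * real k) * 3 = 2 - 8 / (3 * real k + 1)"
      using k2 by (simp add: field_simps)
    have a: "8 / (3 * real k + 1) \<le> 8 / (3 * real k)" using k2 by (intro divide_left_mono) auto
    have b: "3 / (4 * real k) \<le> 3 / (2 * (real k + 1))" using k2 by (intro divide_left_mono) auto
    have d: "3 / (4 * real k) + 2 / real k - 8 / (3 * real k) = 1 / (12 * real k)"
      using k2 by (simp add: field_simps)
    have "0 \<le> 1 / (12 * real k)" by simp
    then show ?thesis unfolding c using a b d by linarith
  qed
  have "harm k + 2 * harm (k - 1) = 3 * harm k - 2 / real k" using hk by simp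
  also have "\<dots> \<le> 3 * (13/22 + ln (real k + 1) - 1 / (2 * (real k + 1))) - 2 / real k" using hu by simp
  also have "\<dots> \<le> 3 * ln (2 * real k)"
  proof -
    have e: "3 / (2 * (real k + 1)) = 3 * (1 / (2 * (real k + 1)))" by simp
    show ?thesis by (rule lin_aux[OF lnk poly[unfolded e]])
  qed
  finally show ?thesis .
qed

definition bnd :: "(nat \<Rightarrow> real) \<Rightarrow> real \<Rightarrow> real \<Rightarrow> real \<Rightarrow> nat \<Rightarrow> real" where
  "bnd \<eta> D0 Gb vs k = ((1 / \<eta> 0) * D0 + (\<Sum>t\<in>{0..<k}. \<eta> t * Gb + 2 * vs)) / k
     + (\<Sum>j\<in>{1..<k}. (\<Sum>t\<in>{k - 1 - j..<k}. \<eta> t * Gb + 2 * vs) / (real j * (real j + 1)))"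

lemma harm_ivl: "k \<ge> 1 \<Longrightarrow> harm (k - 1) = (\<Sum>j\<in>{1..<k}. 1 / real j)"
  unfolding harm_def by (intro sum.cong) (auto simp: inverse_eq_divide)

lemma card_win: "j < k \<Longrightarrow> card {k - 1 - j..<k} = j + 1"
  by simp

lemma win_const_sum:
  assumes "k \<ge> 1"
  shows "(\<Sum>j\<in>{1..<k}. (\<Sum>t\<in>{k - 1 - j..<k}. C) / (real j * (real j + 1))) = C * harm (k - 1)"
proof -
  have "(\<Sum>j\<in>{1..<k}. (\<Sum>t\<in>{k - 1 - j..<k}. C) / (real j * (real j + 1))) = (\<Sum>j\<in>{1..<k}. C * (1 / real j))"
  proof (rule sum.cong[OF refl])
    fix j assume j: "j \<in> {1..<k}"
    then have cd: "card {k - 1 - j..<k} = j + 1" using card_win[of j k] by simp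
    have "(\<Sum>t\<in>{k - 1 - j..<k}. C) = real (card {k - 1 - j..<k}) * C" by simp
    also have "\<dots> = (real j + 1) * C" unfolding cd by simp
    finally have sc: "(\<Sum>t\<in>{k - 1 - j..<k}. C) = (real j + 1) * C" .
    have nz: "real j \<noteq> 0" "real j + 1 \<noteq> 0" using j by auto
    have "(real j + 1) * C / (real j * (real j + 1)) = ((real j + 1) * C) / ((real j + 1) * real j)"
      by (simp add: mult.commute)
    also have "\<dots> = C / real j" by (rule mult_divide_mult_cancel_left[OF nz(2)])
    finally show "(\<Sum>t\<in>{k - 1 - j..<k}. C) / (real j * (real j + 1)) = C * (1 / real j)"
      unfolding sc by simp
  qed
  also have "\<dots> = C * harm (k - 1)" using harm_ivl[OF assms] by (simp add: sum_distrib_left)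
  finally show ?thesis .
qed

lemma case1_bnd:
  assumes a: "\<alpha> > 0" and k: "k \<ge> 1" and Gb: "Gb \<ge> 0" and vs: "vs \<ge> 0" and R: "R > 0"
  shows "bnd (\<lambda>t. \<alpha> / sqrt (real k)) D0 Gb vs k / R
     \<le> (D0 / \<alpha> + 2 * \<alpha> * Gb * ln (2 * real k)) / (R * sqrt (real k))
       + 4 * vs * (sqrt 2 + 8 * sqrt (real k)) / R"
proof -
  define e where "e = \<alpha> / sqrt (real k)"
  define C where "C = e * Gb + 2 * vs"
  have sk: "sqrt (real k) > 0" using k by simp
  have e0: "e > 0" using a sk by (simp add: e_def)
  have C0: "C \<ge> 0" using e0 Gb vs by (simp add: C_def)
  have H: "1 + harm (k - 1) \<le> 2 * ln (2 * real k)" by (rule harm_bound1[OF k])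
  have b: "bnd (\<lambda>t. \<alpha> / sqrt (real k)) D0 Gb vs k = D0 / (e * k) + C * (1 + harm (k - 1))"
    unfolding bnd_def e_def[symmetric] C_def[symmetric] win_const_sum[OF k]
    using k e0 by (simp add: field_simps)
  have t1: "D0 / (e * k) = D0 / \<alpha> / sqrt (real k)"
  proof -
    have "real k = sqrt (real k) * sqrt (real k)" by simp
    then show ?thesis unfolding e_def using sk a by (simp add: field_simps)
  qed
  have t2: "C * (1 + harm (k - 1)) \<le> C * (2 * ln (2 * real k))" using H C0 by (rule mult_left_mono)
  have lnb: "ln (2 * real k) \<le> sqrt 2 + 8 * sqrt (real k)"
  proof -
    have "ln (2 * real k) < 2 * real k" using k by (intro ln_less_self) simp
    have "ln (2 * real k) = 2 * ln (sqrt (2 * real k))" using k by (simp add: ln_sqrt)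
    also have "\<dots> \<le> 2 * sqrt (2 * real k)" using k by (simp add: ln_le_minus_one[THEN order_trans] less_imp_le ln_less_self)
    also have "\<dots> = 2 * sqrt 2 * sqrt (real k)" by (simp add: real_sqrt_mult)
    also have "\<dots> \<le> 8 * sqrt (real k)" using sk by (intro mult_right_mono) (auto simp: real_le_lsqrt)
    finally show ?thesis using real_sqrt_ge_zero[of 2] by linarith
  qed
  have "C * (2 * ln (2 * real k)) = 2 * \<alpha> * Gb * ln (2 * real k) / sqrt (real k) + 4 * vs * ln (2 * real k)"
    unfolding C_def e_def by (simp add: field_simps)
  moreover have "4 * vs * ln (2 * real k) \<le> 4 * vs * (sqrt 2 + 8 * sqrt (real k))"
    using lnb vs by (intro mult_left_mono) auto
  ultimately have "bnd (\<lambda>t. \<alpha> / sqrt (real k)) D0 Gb vs k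
      \<le> (D0 / \<alpha> + 2 * \<alpha> * Gb * ln (2 * real k)) / sqrt (real k) + 4 * vs * (sqrt 2 + 8 * sqrt (real k))"
    using b t1 t2 by (simp add: add_divide_distrib)
  then have "bnd (\<lambda>t. \<alpha> / sqrt (real k)) D0 Gb vs k / R
      \<le> ((D0 / \<alpha> + 2 * \<alpha> * Gb * ln (2 * real k)) / sqrt (real k) + 4 * vs * (sqrt 2 + 8 * sqrt (real k))) / R"
    using R by (intro divide_right_mono) auto
  also have "\<dots> = (D0 / \<alpha> + 2 * \<alpha> * Gb * ln (2 * real k)) / (R * sqrt (real k)) + 4 * vs * (sqrt 2 + 8 * sqrt (real k)) / R"
    by (simp add: add_divide_distrib divide_divide_eq_left mult.commute)
  finally show ?thesis .
qed


lemma recip_split_sum: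
  assumes k: "k \<ge> 1"
  shows "(\<Sum>j\<in>{1..<k}. 1 / (real j * (real k - real j))) = 2 * harm (k - 1) / real k"
proof -
  have kp: "real k > 0" using k by simp
  have "(\<Sum>j\<in>{1..<k}. 1 / (real j * (real k - real j))) = (\<Sum>j\<in>{1..<k}. (1 / real j + 1 / (real k - real j)) / real k)"
  proof (rule sum.cong[OF refl])
    fix j assume j: "j \<in> {1..<k}"
    then have "real j > 0" "real k - real j > 0" by auto
    then show "1 / (real j * (real k - real j)) = (1 / real j + 1 / (real k - real j)) / real k"
      using kp by (simp add: field_simps)
  qed
  also have "\<dots> = ((\<Sum>j\<in>{1..<k}. 1 / real j) + (\<Sum>j\<in>{1..<k}. 1 / (real k - real j))) / real k"
    by (simp only: sum.distrib[symmetric] sum_divide_distrib)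
  also have "(\<Sum>j\<in>{1..<k}. 1 / (real k - real j)) = (\<Sum>j\<in>{1..<k}. 1 / real j)"
  proof (rule sum.reindex_bij_witness[of _ "\<lambda>j. k - j" "\<lambda>j. k - j"])
    fix a assume "a \<in> {1..<k}"
    then show "k - (k - a) = a" "k - a \<in> {1..<k}" "1 / real (k - a) = 1 / (real k - real a)" by auto
  qed auto
  finally show ?thesis using harm_ivl[OF k] by simp
qed

lemma case2_bnd:
  assumes m: "\<mu> > 0" and k: "k \<ge> 1" and Gb: "Gb \<ge> 0" and vs: "vs \<ge> 0" and R: "R > 0"
  shows "bnd (\<lambda>t. 1 / (\<mu> * (real t + 1))) D0 Gb vs k / R
     \<le> (\<mu> * D0 + 3 * Gb * ln (2 * real k) / \<mu>) / (R * real k) + 4 * vs * ln (2 * real k) / R"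
proof -
  define \<eta> where "\<eta> = (\<lambda>t::nat. 1 / (\<mu> * (real t + 1)))"
  have kp: "real k > 0" using k by simp
  have e0: "1 / \<eta> 0 = \<mu>" by (simp add: \<eta>_def)
  have avg: "(\<Sum>t\<in>{0..<k}. \<eta> t * Gb + 2 * vs) = Gb / \<mu> * harm k + 2 * vs * real k"
  proof -
    have "(\<Sum>t\<in>{0..<k}. \<eta> t * Gb + 2 * vs) = Gb / \<mu> * (\<Sum>t<k. inverse (real (Suc t))) + 2 * vs * real k"
      by (simp add: \<eta>_def sum.distrib sum_distrib_left atLeast0LessThan field_simps)
    then show ?thesis by (simp add: harm_altdef)
  qed
  have win: "(\<Sum>t\<in>{k - 1 - j..<k}. \<eta> t * Gb + 2 * vs) \<le> (real j + 1) * (Gb / (\<mu> * (real k - real j)) + 2 * vs)"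
    if j: "j \<in> {1..<k}" for j
  proof -
    have "(\<Sum>t\<in>{k - 1 - j..<k}. \<eta> t * Gb + 2 * vs) \<le> real (card {k - 1 - j..<k}) * (Gb / (\<mu> * (real k - real j)) + 2 * vs)"
    proof (rule sum_bounded_above)
      fix t assume t: "t \<in> {k - 1 - j..<k}"
      then have "real k - real j \<le> real t + 1" "real k - real j > 0" using j by auto
      then have "1 / (\<mu> * (real t + 1)) \<le> 1 / (\<mu> * (real k - real j))"
        using m by (intro divide_left_mono mult_left_mono mult_pos_pos) auto
      then have "\<eta> t * Gb \<le> 1 / (\<mu> * (real k - real j)) * Gb" unfolding \<eta>_def using Gb by (rule mult_right_mono)
      then show "\<eta> t * Gb + 2 * vs \<le> Gb / (\<mu> * (real k - real j)) + 2 * vs" by simp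
    qed
    also have "card {k - 1 - j..<k} = j + 1" using j by simp
    finally show ?thesis by (simp add: add.commute)
  qed
  have ws: "(\<Sum>j\<in>{1..<k}. (\<Sum>t\<in>{k - 1 - j..<k}. \<eta> t * Gb + 2 * vs) / (real j * (real j + 1)))
      \<le> (\<Sum>j\<in>{1..<k}. Gb / \<mu> * (1 / (real j * (real k - real j))) + 2 * vs * (1 / real j))"
  proof (rule sum_mono)
    fix j assume j: "j \<in> {1..<k}"
    have jp: "real j > 0" "real k - real j > 0" using j by auto
    have "(\<Sum>t\<in>{k - 1 - j..<k}. \<eta> t * Gb + 2 * vs) / (real j * (real j + 1))
        \<le> (real j + 1) * (Gb / (\<mu> * (real k - real j)) + 2 * vs) / (real j * (real j + 1))"
      using win[OF j] jp by (intro divide_right_mono) auto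
    also have "\<dots> = ((real j + 1) * (Gb / (\<mu> * (real k - real j)) + 2 * vs)) / ((real j + 1) * real j)"
      by (simp add: mult.commute)
    also have "\<dots> = (Gb / (\<mu> * (real k - real j)) + 2 * vs) / real j"
      using jp by (intro mult_divide_mult_cancel_left) auto
    also have "\<dots> = Gb / \<mu> * (1 / (real j * (real k - real j))) + 2 * vs * (1 / real j)"
      by (simp add: add_divide_distrib divide_divide_eq_left mult.commute)
    finally show "(\<Sum>t\<in>{k - 1 - j..<k}. \<eta> t * Gb + 2 * vs) / (real j * (real j + 1))
        \<le> Gb / \<mu> * (1 / (real j * (real k - real j))) + 2 * vs * (1 / real j)" .
  qed
  also have "\<dots> = Gb / \<mu> * (2 * harm (k - 1) / real k) + 2 * vs * harm (k - 1)"
    by (simp only: sum.distrib sum_distrib_left[symmetric] recip_split_sum[OF k] harm_ivl[OF k, symmetric])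
  finally have ws': "(\<Sum>j\<in>{1..<k}. (\<Sum>t\<in>{k - 1 - j..<k}. \<eta> t * Gb + 2 * vs) / (real j * (real j + 1)))
      \<le> Gb / \<mu> * (2 * harm (k - 1) / real k) + 2 * vs * harm (k - 1)" .
  have "bnd \<eta> D0 Gb vs k \<le> (\<mu> * D0 + Gb / \<mu> * harm k + 2 * vs * real k) / real k
      + (Gb / \<mu> * (2 * harm (k - 1) / real k) + 2 * vs * harm (k - 1))"
    unfolding bnd_def e0 avg using ws' by (simp add: add.assoc)
  also have "\<dots> = (\<mu> * D0 + Gb / \<mu> * (harm k + 2 * harm (k - 1))) / real k + 2 * vs * (1 + harm (k - 1))"
    using kp m by (simp add: field_simps)
  also have "\<dots> \<le> (\<mu> * D0 + Gb / \<mu> * (3 * ln (2 * real k))) / real k + 2 * vs * (2 * ln (2 * real k))"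
  proof -
    have "Gb / \<mu> * (harm k + 2 * harm (k - 1)) \<le> Gb / \<mu> * (3 * ln (2 * real k))"
      using harm_bound2[OF k] Gb m by (intro mult_left_mono) auto
    moreover have "2 * vs * (1 + harm (k - 1)) \<le> 2 * vs * (2 * ln (2 * real k))"
      using harm_bound1[OF k] vs by (intro mult_left_mono) auto
    ultimately show ?thesis using kp by (smt (verit) divide_right_mono)
  qed
  finally have b: "bnd \<eta> D0 Gb vs k \<le> (\<mu> * D0 + 3 * Gb * ln (2 * real k) / \<mu>) / real k + 4 * vs * ln (2 * real k)"
    by (simp add: algebra_simps)
  have "bnd \<eta> D0 Gb vs k / R \<le> ((\<mu> * D0 + 3 * Gb * ln (2 * real k) / \<mu>) / real k + 4 * vs * ln (2 * real k)) / R"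
    using b R by (intro divide_right_mono) auto
  also have "\<dots> = (\<mu> * D0 + 3 * Gb * ln (2 * real k) / \<mu>) / (R * real k) + 4 * vs * ln (2 * real k) / R"
    by (simp add: add_divide_distrib divide_divide_eq_left mult.commute)
  finally show ?thesis unfolding \<eta>_def .
qed

lemma Kop_meas:
  fixes P :: "'s::finite \<Rightarrow> 'a::finite \<Rightarrow> 's \<Rightarrow> real" and p :: "'w \<Rightarrow> 's \<Rightarrow> real^'a"
  assumes pm: "\<And>s a. (\<lambda>w. p w s $ a) \<in> borel_measurable N"
    and gm: "\<And>s'. (\<lambda>w. g w s') \<in> borel_measurable N"
  shows "(\<lambda>w. Kop P (p w) (g w) s) \<in> borel_measurable N"
  unfolding Kop_def using pm gm
  by (intro borel_measurable_sum borel_measurable_times borel_measurable_const) auto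

lemma Kpow_meas:
  fixes P :: "'s::finite \<Rightarrow> 'a::finite \<Rightarrow> 's \<Rightarrow> real" and p :: "'w \<Rightarrow> 's \<Rightarrow> real^'a"
  assumes pm: "\<And>s a. (\<lambda>w. p w s $ a) \<in> borel_measurable N"
  shows "(\<lambda>w. (Kop P (p w) ^^ n) f s) \<in> borel_measurable N"
proof (induction n arbitrary: s)
  case 0 show ?case by simp
next
  case (Suc n)
  show ?case using Kop_meas[OF pm Suc] by simp
qed

lemma Wop_meas:
  fixes P :: "'s::finite \<Rightarrow> 'a::finite \<Rightarrow> 's \<Rightarrow> real" and p :: "'w \<Rightarrow> 's \<Rightarrow> real^'a"
  assumes pm: "\<And>s a. (\<lambda>w. p w s $ a) \<in> borel_measurable N"
  shows "(\<lambda>w. Wop P \<gamma> (p w) f s) \<in> borel_measurable N"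
  unfolding Wop_def
  by (intro borel_measurable_suminf borel_measurable_times borel_measurable_const Kpow_meas pm)

lemma Wop_sum:
  fixes P :: "'s::finite \<Rightarrow> 'a::finite \<Rightarrow> 's \<Rightarrow> real"
  assumes trP: "is_transition P" and pp: "is_policy pol" and g0: "0 \<le> \<gamma>" and g1: "\<gamma> < 1"
  shows "finite I \<Longrightarrow> Wop P \<gamma> pol (\<lambda>x. \<Sum>i\<in>I. f i x) s = (\<Sum>i\<in>I. Wop P \<gamma> pol (f i) s)"
proof (induction I rule: finite_induct)
  case empty then show ?case using Wop_const[OF trP pp g0 g1, of 0 s] by simp
next
  case (insert i I)
  have "Wop P \<gamma> pol (\<lambda>x. \<Sum>i\<in>insert i I. f i x) s = Wop P \<gamma> pol (\<lambda>x. f i x + (\<Sum>i\<in>I. f i x)) s"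
    using insert by simp
  also have "\<dots> = Wop P \<gamma> pol (f i) s + Wop P \<gamma> pol (\<lambda>x. \<Sum>i\<in>I. f i x) s"
    by (rule Wop_add[OF trP pp g0 g1])
  finally show ?case using insert by simp
qed

definition wt :: "('s::finite \<Rightarrow> 'a::finite \<Rightarrow> 's \<Rightarrow> real) \<Rightarrow> real \<Rightarrow> ('s \<Rightarrow> real^'a) \<Rightarrow> 's \<Rightarrow> 's \<Rightarrow> real" where
  "wt P \<gamma> p s0 s' = Wop P \<gamma> p (\<lambda>x. if x = s' then 1 else 0) s0"

lemma Wop_weights:
  fixes P :: "'s::finite \<Rightarrow> 'a::finite \<Rightarrow> 's \<Rightarrow> real"
  assumes trP: "is_transition P" and pp: "is_policy pol" and g0: "0 \<le> \<gamma>" and g1: "\<gamma> < 1"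
  shows "Wop P \<gamma> pol f s0 = (\<Sum>s'\<in>UNIV. wt P \<gamma> pol s0 s' * f s')"
proof -
  have "f = (\<lambda>x. \<Sum>s'\<in>UNIV. f s' * (if x = s' then 1 else 0))"
    by (rule ext) (simp add: if_distrib cong: if_cong)
  then have "Wop P \<gamma> pol f s0 = Wop P \<gamma> pol (\<lambda>x. \<Sum>s'\<in>UNIV. f s' * (if x = s' then 1 else 0)) s0" by simp
  also have "\<dots> = (\<Sum>s'\<in>UNIV. Wop P \<gamma> pol (\<lambda>x. f s' * (if x = s' then 1 else 0)) s0)"
    by (rule Wop_sum[OF trP pp g0 g1]) simp
  also have "\<dots> = (\<Sum>s'\<in>UNIV. wt P \<gamma> pol s0 s' * f s')"
    unfolding wt_def by (simp add: Wop_scale[OF trP pp g0 g1] mult.commute)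
  finally show ?thesis .
qed

lemma wt_bounds:
  fixes P :: "'s::finite \<Rightarrow> 'a::finite \<Rightarrow> 's \<Rightarrow> real"
  assumes trP: "is_transition P" and pp: "is_policy pol" and g0: "0 \<le> \<gamma>" and g1: "\<gamma> < 1"
  shows "0 \<le> wt P \<gamma> pol s0 s'" "wt P \<gamma> pol s0 s' \<le> 1 / (1 - \<gamma>)"
proof -
  show "0 \<le> wt P \<gamma> pol s0 s'" unfolding wt_def by (rule Wop_nonneg[OF trP pp g0 g1]) simp
  have "wt P \<gamma> pol s0 s' \<le> Wop P \<gamma> pol (\<lambda>_. 1) s0"
    unfolding wt_def by (rule Wop_mono[OF trP pp g0 g1]) simp
  then show "wt P \<gamma> pol s0 s' \<le> 1 / (1 - \<gamma>)" using Wop_const[OF trP pp g0 g1, of 1 s0] by simp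
qed

lemma wt_meas:
  fixes P :: "'s::finite \<Rightarrow> 'a::finite \<Rightarrow> 's \<Rightarrow> real" and p :: "'w \<Rightarrow> 's \<Rightarrow> real^'a"
  assumes pm: "\<And>s a. (\<lambda>w. p w s $ a) \<in> borel_measurable N"
  shows "(\<lambda>w. wt P \<gamma> (p w) s0 s') \<in> borel_measurable N"
  unfolding wt_def by (rule Wop_meas[OF pm])

lemma hist_alg_props:
  assumes xi: "\<forall>t. \<xi> t \<in> measurable M X"
  shows "space (hist_alg M X \<xi> t) = space M"
    and "sets (hist_alg M X \<xi> t) \<subseteq> sets M"
    and "t \<le> t' \<Longrightarrow> sets (hist_alg M X \<xi> t) \<subseteq> sets (hist_alg M X \<xi> t')"
proof -
  let ?G = "\<lambda>t. {\<xi> i -` A \<inter> space M | i A. i < t \<and> A \<in> sets X}"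
  have GP: "?G t \<subseteq> Pow (space M)" for t by auto
  have GM: "?G t \<subseteq> sets M" for t using xi by (auto intro: measurable_sets)
  show "space (hist_alg M X \<xi> t) = space M" unfolding hist_alg_def by (simp add: space_measure_of_conv)
  show "sets (hist_alg M X \<xi> t) \<subseteq> sets M"
    unfolding hist_alg_def sets_measure_of[OF GP] by (rule sets.sigma_sets_subset[OF GM])
  assume tt: "t \<le> t'"
  have "?G t \<subseteq> ?G t'"
  proof
    fix B assume "B \<in> ?G t"
    then obtain i A where B: "B = \<xi> i -` A \<inter> space M" "i < t" "A \<in> sets X" by blast
    then have "i < t'" using tt by simp
    then show "B \<in> ?G t'" using B by blast
  qed
  then show "sets (hist_alg M X \<xi> t) \<subseteq> sets (hist_alg M X \<xi> t')"
    unfolding hist_alg_def sets_measure_of[OF GP] by (rule sigma_sets_mono')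
qed

lemma le_one_plus_sq: fixes x :: real shows "x \<le> 1 + x\<^sup>2"
proof -
  have "0 \<le> (x - 1) * (x - 1)" by simp
  then have a: "x * 2 \<le> 1 + x * x" by (simp add: algebra_simps)
  have b: "0 \<le> x * x" by simp
  show ?thesis unfolding power2_eq_square using a b by linarith
qed

lemma pol_le1:
  fixes P :: "'s::finite \<Rightarrow> 'a::finite \<Rightarrow> 's \<Rightarrow> real" and q :: "'s \<Rightarrow> real ^ 'a"
  assumes "is_transition P" "is_policy q"
  shows "q s $ a \<le> 1"
proof -
  have "q s $ a \<le> (\<Sum>b\<in>UNIV. q s $ b)"
    by (rule member_le_sum) (use pol_nonneg[OF assms] in auto)
  then show ?thesis using pol_sum[OF assms] by simp
qed

locale spmd_full = spmd_det P c \<gamma> nrm \<omega> g\<omega> h \<mu>h Mh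
  for P :: "'s::finite \<Rightarrow> 'a::finite \<Rightarrow> 's \<Rightarrow> real" and c \<gamma> nrm \<omega> g\<omega> h \<mu>h Mh +
  fixes pstar :: "'s \<Rightarrow> real ^ 'a"
    and M :: "'w measure" and X :: "'x measure" and \<xi> :: "nat \<Rightarrow> 'w \<Rightarrow> 'x"
    and Qt :: "nat \<Rightarrow> 'w \<Rightarrow> 's \<Rightarrow> real ^ 'a" and pol :: "nat \<Rightarrow> 'w \<Rightarrow> 's \<Rightarrow> real ^ 'a"
    and \<pi>0 :: "'s \<Rightarrow> real ^ 'a" and \<eta> :: "nat \<Rightarrow> real" and vs Qbar D0 :: real and k :: nat
  assumes norm_simplex: "\<forall>p\<in>prob_simplex. nrm p \<le> 1"
    and pstar: "is_policy pstar"
    and prob: "prob_space M"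
    and xi_meas: "\<forall>t. \<xi> t \<in> measurable M X"
    and pi0: "is_policy \<pi>0" "\<forall>w\<in>space M. pol 0 w = \<pi>0"
    and pol_meas: "\<forall>t s a. (\<lambda>w. pol t w s $ a) \<in> borel_measurable (hist_alg M X \<xi> t)"
    and Qt_meas: "\<forall>t s a. (\<lambda>w. Qt t w s $ a) \<in> borel_measurable (hist_alg M X \<xi> (Suc t))"
    and spmd: "\<forall>t. \<forall>w\<in>space M. \<forall>s. pol (Suc t) w s \<in> prob_simplex \<and>
       (\<forall>p\<in>prob_simplex.
          \<eta> t * (Qt t w s \<bullet> pol (Suc t) w s + h s (pol (Suc t) w s))
            + bregman \<omega> g\<omega> (pol (Suc t) w s) (pol t w s)
          \<le> \<eta> t * (Qt t w s \<bullet> p + h s p) + bregman \<omega> g\<omega> p (pol t w s))"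
    and A_nonneg: "0 \<le> vs" "0 \<le> Qbar"
    and A_bias: "\<forall>t. AE w in M. dual_normF nrm (\<lambda>s. \<chi> a.
         real_cond_exp M (hist_alg M X \<xi> t) (\<lambda>w'. Qt t w' s $ a) w
         - Qfun P c h \<gamma> (pol t w) s $ a) \<le> vs"
    and A_mom: "\<forall>t. AE w in M. nn_cond_exp M (hist_alg M X \<xi> t)
         (\<lambda>w'. ennreal ((dual_normF nrm (Qt t w'))\<^sup>2)) w \<le> ennreal (Qbar\<^sup>2)"
    and D0: "0 < D0" "\<forall>s. \<forall>p\<in>prob_simplex. bregman \<omega> g\<omega> p (\<pi>0 s) \<le> D0"
    and k: "1 \<le> k"
    and eta_pos: "\<forall>t. \<eta> t > 0" and eta_mono: "\<forall>t. 1 / \<eta> (Suc t) \<le> 1 / \<eta> t + \<mu>h"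
begin

abbreviation F where "F t \<equiv> hist_alg M X \<xi> t"

lemma F_space: "space (F t) = space M"
  using hist_alg_props(1)[OF xi_meas] .

lemma F_sub: "subalgebra M (F t)"
  unfolding subalgebra_def using hist_alg_props(1,2)[OF xi_meas] by simp

lemma F_mono: "t \<le> t' \<Longrightarrow> subalgebra (F t') (F t)"
  unfolding subalgebra_def using hist_alg_props[OF xi_meas] by simp

lemma sfs: "sigma_finite_subalgebra M (F t)"
proof -
  have fm: "finite_measure M" by (rule prob_space.finite_measure[OF prob])
  have "finite_measure_subalgebra M (F t)"
    unfolding finite_measure_subalgebra_def finite_measure_subalgebra_axioms_def using fm F_sub by blast
  then show ?thesis by (rule finite_measure_subalgebra_is_sigma_finite)
qed

lemma pol_policy: "is_policy (pol t w)" if "w \<in> space M"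
proof (cases t)
  case 0 then show ?thesis using pi0 that by simp
next
  case (Suc n)
  have "pol (Suc n) w s \<in> prob_simplex" for s using conjunct1[OF spmd[rule_format, OF that]] .
  then show ?thesis using Suc unfolding is_policy_def by simp
qed

lemma pol_measF: "t \<le> t' \<Longrightarrow> (\<lambda>w. pol t w s $ a) \<in> borel_measurable (F t')"
  using measurable_from_subalg[OF F_mono pol_meas[rule_format]] by blast

lemma pol_measM: "(\<lambda>w. pol t w s $ a) \<in> borel_measurable M"
  using measurable_from_subalg[OF F_sub pol_meas[rule_format]] by blast

lemma Qt_measM: "(\<lambda>w. Qt t w s $ a) \<in> borel_measurable M"
  using measurable_from_subalg[OF F_sub Qt_meas[rule_format]] by blast

lemma Qvec_meas: "(\<lambda>w. Qt t w s) \<in> borel_measurable M"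
proof (subst borel_measurable_euclidean_space, intro ballI)
  fix i :: "real^'a" assume "i \<in> Basis"
  then obtain a where i: "i = axis a 1" by (auto simp: Basis_vec_def)
  show "(\<lambda>x. Qt t x s \<bullet> i) \<in> borel_measurable M"
    unfolding i cart_eq_inner_axis[symmetric] by (rule Qt_measM)
qed

definition G :: "nat \<Rightarrow> 'w \<Rightarrow> real" where "G t w = (dual_normF nrm (Qt t w))\<^sup>2"

lemma G_meas: "G t \<in> borel_measurable M"
proof -
  have "(\<lambda>w. dual_norm nrm (Qt t w s)) \<in> borel_measurable M" for s
    by (rule borel_measurable_continuous_on[OF dn_cont[OF N] Qvec_meas])
  then have "(\<lambda>w. dual_normF nrm (Qt t w)) \<in> borel_measurable M"
    unfolding dual_normF_def by (intro borel_measurable_Max) auto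
  then show ?thesis unfolding G_def by measurable
qed

lemma G_nonneg: "0 \<le> G t w" unfolding G_def by simp

lemma G_nn: "(\<integral>\<^sup>+ w. ennreal (G t w) \<partial>M) \<le> ennreal (Qbar\<^sup>2)"
proof -
  interpret sigma_finite_subalgebra M "F t" by (rule sfs)
  have gm: "(\<lambda>w. ennreal (G t w)) \<in> borel_measurable M" using G_meas by measurable
  have "(\<integral>\<^sup>+ w. ennreal (G t w) \<partial>M) = (\<integral>\<^sup>+ w. 1 * ennreal (G t w) \<partial>M)" by simp
  also have "\<dots> = (\<integral>\<^sup>+ w. 1 * nn_cond_exp M (F t) (\<lambda>w. ennreal (G t w)) w \<partial>M)"
    by (rule nn_cond_exp_intg[symmetric]) (auto intro: gm)
  also have "\<dots> \<le> (\<integral>\<^sup>+ w. ennreal (Qbar\<^sup>2) \<partial>M)"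
    using A_mom unfolding G_def by (intro nn_integral_mono_AE) auto
  also have "\<dots> = ennreal (Qbar\<^sup>2)"
    using prob_space.emeasure_space_1[OF prob] by simp
  finally show ?thesis .
qed

lemma G_int: "integrable M (G t)"
proof (rule integrableI_nonneg)
  show "G t \<in> borel_measurable M" by (rule G_meas)
  show "AE x in M. 0 \<le> G t x" by (simp add: G_nonneg)
  show "(\<integral>\<^sup>+ x. ennreal (G t x) \<partial>M) < \<infinity>" using G_nn[of t] by (simp add: le_less_trans)
qed

lemma G_E: "(\<integral>w. G t w \<partial>M) \<le> Qbar\<^sup>2"
  by (rule integral_real_bounded) (use G_nn in auto)

lemma Q_int: "integrable M (\<lambda>w. Qt t w s $ a)"
proof (rule Bochner_Integration.integrable_bound)
  show "integrable M (\<lambda>w. nrm (axis a 1) * (1 + G t w))"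
    using G_int prob_space.finite_measure[OF prob]
    by (intro integrable_mult_right Bochner_Integration.integrable_add finite_measure.integrable_const) auto
  show "(\<lambda>w. Qt t w s $ a) \<in> borel_measurable M" by (rule Qt_measM)
  show "AE w in M. norm (Qt t w s $ a) \<le> norm (nrm (axis a 1) * (1 + G t w))"
  proof (rule AE_I2)
    fix w
    have d0: "0 \<le> dual_norm nrm (Qt t w s)" by (rule dn_nonneg[OF N])
    have d1: "dual_norm nrm (Qt t w s) \<le> dual_normF nrm (Qt t w)" by (rule dn_le_dnF)
    have "dual_normF nrm (Qt t w) \<le> 1 + G t w"
      unfolding G_def by (rule le_one_plus_sq)
    then have "dual_norm nrm (Qt t w s) \<le> 1 + G t w" using d1 by linarith
    moreover have "0 \<le> nrm (axis a 1)" by (rule nrm_nonneg[OF N])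
    ultimately have "nrm (axis a 1) * dual_norm nrm (Qt t w s) \<le> nrm (axis a 1) * (1 + G t w)"
      by (intro mult_left_mono)
    then have "\<bar>Qt t w s $ a\<bar> \<le> nrm (axis a 1) * (1 + G t w)"
      using comp_bound[OF N, of "Qt t w s" a] by linarith
    moreover have "0 \<le> nrm (axis a 1) * (1 + G t w)" using G_nonneg \<open>0 \<le> nrm (axis a 1)\<close> by simp
    ultimately show "norm (Qt t w s $ a) \<le> norm (nrm (axis a 1) * (1 + G t w))" by simp
  qed
qed

definition CE :: "nat \<Rightarrow> 's \<Rightarrow> 'a \<Rightarrow> 'w \<Rightarrow> real" where
  "CE t s a w = real_cond_exp M (F t) (\<lambda>w'. Qt t w' s $ a) w"

definition Z :: "'s \<Rightarrow> ('w \<Rightarrow> 's \<Rightarrow> real ^ 'a) \<Rightarrow> nat \<Rightarrow> 'w \<Rightarrow> real" where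
  "Z s0 p t w = (\<Sum>s'\<in>UNIV. \<Sum>a\<in>UNIV. (wt P \<gamma> (p w) s0 s' * (pol t w s' $ a - p w s' $ a)) * (CE t s' a w - Qt t w s' $ a))"

lemma Z_int:
  assumes pm: "\<And>s a. (\<lambda>w. p w s $ a) \<in> borel_measurable (F t)"
    and pp: "\<And>w. w \<in> space M \<Longrightarrow> is_policy (p w)"
  shows "integrable M (Z s0 p t) \<and> (\<integral>w. Z s0 p t w \<partial>M) = 0"
proof -
  interpret sigma_finite_subalgebra M "F t" by (rule sfs)
  define Y where "Y s' a w = wt P \<gamma> (p w) s0 s' * (pol t w s' $ a - p w s' $ a)" for s' a w
  have Ym: "Y s' a \<in> borel_measurable (F t)" for s' a
    unfolding Y_def using wt_meas[OF pm] pol_measF[of t t] pm by (intro borel_measurable_times borel_measurable_diff) auto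
  have YmM: "Y s' a \<in> borel_measurable M" for s' a using measurable_from_subalg[OF F_sub Ym] .
  have Yb: "\<bar>Y s' a w\<bar> \<le> 1 / (1 - \<gamma>)" if w: "w \<in> space M" for s' a w
  proof -
    have p1: "is_policy (p w)" "is_policy (pol t w)" using pp w pol_policy by auto
    have "\<bar>pol t w s' $ a - p w s' $ a\<bar> \<le> 1"
      using pol_le1[OF trP p1(1)] pol_le1[OF trP p1(2)] pol_nonneg[OF trP p1(1)] pol_nonneg[OF trP p1(2)]
      by (simp add: abs_le_iff) (smt (verit))
    moreover have "0 \<le> wt P \<gamma> (p w) s0 s'" "wt P \<gamma> (p w) s0 s' \<le> 1 / (1 - \<gamma>)"
      using wt_bounds[OF trP p1(1) g0 g1] by auto
    ultimately have "\<bar>wt P \<gamma> (p w) s0 s'\<bar> * \<bar>pol t w s' $ a - p w s' $ a\<bar> \<le> 1 / (1 - \<gamma>) * 1"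
      using g1 by (intro mult_mono) auto
    then show ?thesis unfolding Y_def abs_mult by simp
  qed
  have intQ: "integrable M (\<lambda>w. Y s' a w * Qt t w s' $ a)" for s' a
  proof (rule Bochner_Integration.integrable_bound)
    show "integrable M (\<lambda>w. 1 / (1 - \<gamma>) * Qt t w s' $ a)" by (intro integrable_mult_right Q_int)
    show "(\<lambda>w. Y s' a w * Qt t w s' $ a) \<in> borel_measurable M" using YmM Qt_measM by measurable
    show "AE w in M. norm (Y s' a w * Qt t w s' $ a) \<le> norm (1 / (1 - \<gamma>) * Qt t w s' $ a)"
    proof (rule AE_I2)
      fix w assume "w \<in> space M"
      then have "\<bar>Y s' a w\<bar> \<le> 1 / (1 - \<gamma>)" by (rule Yb)
      then have "\<bar>Y s' a w\<bar> * \<bar>Qt t w s' $ a\<bar> \<le> 1 / (1 - \<gamma>) * \<bar>Qt t w s' $ a\<bar>"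
        by (rule mult_right_mono) simp
      moreover have "\<bar>1 / (1 - \<gamma>)\<bar> = 1 / (1 - \<gamma>)" using g1 by simp
      ultimately show "norm (Y s' a w * Qt t w s' $ a) \<le> norm (1 / (1 - \<gamma>) * Qt t w s' $ a)"
        by (simp only: real_norm_def abs_mult)
    qed
  qed
  have ce: "integrable M (\<lambda>w. Y s' a w * CE t s' a w)" "(\<integral>w. Y s' a w * CE t s' a w \<partial>M) = (\<integral>w. Y s' a w * Qt t w s' $ a \<partial>M)" for s' a
    unfolding CE_def using real_cond_exp_intg[OF intQ Ym Qt_measM] by auto
  have i1: "integrable M (\<lambda>w. Y s' a w * (CE t s' a w - Qt t w s' $ a))" for s' a
    using ce(1) intQ by (simp add: right_diff_distrib)
  have i0: "(\<integral>w. Y s' a w * (CE t s' a w - Qt t w s' $ a) \<partial>M) = 0" for s' a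
    using ce[of s' a] intQ[of s' a] by (simp add: right_diff_distrib)
  have Zeq: "Z s0 p t = (\<lambda>w. \<Sum>s'\<in>UNIV. \<Sum>a\<in>UNIV. Y s' a w * (CE t s' a w - Qt t w s' $ a))"
    unfolding Z_def Y_def by simp
  have int2: "integrable M (\<lambda>w. \<Sum>a\<in>UNIV. Y s' a w * (CE t s' a w - Qt t w s' $ a))" for s'
    by (intro Bochner_Integration.integrable_sum i1)
  have "(\<integral>w. (\<Sum>s'\<in>UNIV. \<Sum>a\<in>UNIV. Y s' a w * (CE t s' a w - Qt t w s' $ a)) \<partial>M)
      = (\<Sum>s'\<in>UNIV. \<integral>w. (\<Sum>a\<in>UNIV. Y s' a w * (CE t s' a w - Qt t w s' $ a)) \<partial>M)"
    by (rule Bochner_Integration.integral_sum) (rule int2)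
  also have "\<dots> = (\<Sum>s'\<in>UNIV. \<Sum>a\<in>UNIV. \<integral>w. Y s' a w * (CE t s' a w - Qt t w s' $ a) \<partial>M)"
    by (intro sum.cong refl Bochner_Integration.integral_sum i1)
  also have "\<dots> = 0" by (simp add: i0)
  finally show ?thesis unfolding Zeq using int2 by (simp add: Bochner_Integration.integrable_sum)
qed

end

context spmd_full
begin

lemma pol_inS: "w \<in> space M \<Longrightarrow> pol t w s \<in> prob_simplex"
  using pol_policy unfolding is_policy_def by blast

lemma err_bound:
  assumes w: "w \<in> space M" and pp: "is_policy p"
    and bias: "dual_normF nrm (\<lambda>s. \<chi> a. CE t s a w - Qfun P c h \<gamma> (pol t w) s $ a) \<le> vs"
  shows "Wop P \<gamma> p (\<lambda>s'. (Qfun P c h \<gamma> (pol t w) s' - Qt t w s') \<bullet> (pol t w s' - p s')) s0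
     \<le> 2 * vs / (1 - \<gamma>) + (\<Sum>s'\<in>UNIV. \<Sum>a\<in>UNIV. (wt P \<gamma> p s0 s' * (pol t w s' $ a - p s' $ a)) * (CE t s' a w - Qt t w s' $ a))"
proof -
  define CEv where "CEv s' = (\<chi> a. CE t s' a w)" for s'
  define Qv where "Qv s' = Qfun P c h \<gamma> (pol t w) s'" for s'
  define d where "d s' = pol t w s' - p s'" for s'
  have fe: "(\<lambda>s. \<chi> a. CE t s a w - Qfun P c h \<gamma> (pol t w) s $ a) = (\<lambda>s. CEv s - Qv s)"
    by (rule ext) (simp add: vec_eq_iff CEv_def Qv_def)
  have pw: "(Qv s' - Qt t w s') \<bullet> d s' \<le> 2 * vs + (CEv s' - Qt t w s') \<bullet> d s'" for s'
  proof -
    have split: "(Qv s' - Qt t w s') \<bullet> d s' = (CEv s' - Qv s') \<bullet> (- d s') + (CEv s' - Qt t w s') \<bullet> d s'"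
      by (simp add: inner_diff_left inner_minus_right)
    have h1: "(CEv s' - Qv s') \<bullet> (- d s') \<le> dual_norm nrm (CEv s' - Qv s') * nrm (- d s')"
      by (rule holder[OF N])
    have dnb: "dual_norm nrm (CEv s' - Qv s') \<le> vs"
      using dn_le_dnF[of nrm "\<lambda>s. CEv s - Qv s" s'] bias unfolding fe by simp
    have nd: "nrm (- d s') \<le> 2"
    proof -
      have "nrm (- d s') = nrm (p s' + (- pol t w s'))" by (simp add: d_def)
      also have "\<dots> \<le> nrm (p s') + nrm (- pol t w s')" by (rule nrm_triangle[OF N])
      also have "\<dots> = nrm (p s') + nrm (pol t w s')" by (simp add: nrm_neg[OF N])
      also have "\<dots> \<le> 2" using norm_simplex pp pol_inS[OF w] unfolding is_policy_def
        by (smt (verit))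
      finally show ?thesis .
    qed
    have "dual_norm nrm (CEv s' - Qv s') * nrm (- d s') \<le> vs * 2"
      using dnb nd dn_nonneg[OF N] nrm_nonneg[OF N] A_nonneg by (intro mult_mono) auto
    then show ?thesis using split h1 by linarith
  qed
  have "Wop P \<gamma> p (\<lambda>s'. (Qv s' - Qt t w s') \<bullet> d s') s0 \<le> Wop P \<gamma> p (\<lambda>s'. 2 * vs + (CEv s' - Qt t w s') \<bullet> d s') s0"
    by (rule Wop_mono[OF trP pp g0 g1]) (rule pw)
  also have "\<dots> = Wop P \<gamma> p (\<lambda>_. 2 * vs) s0 + Wop P \<gamma> p (\<lambda>s'. (CEv s' - Qt t w s') \<bullet> d s') s0"
    by (rule Wop_add[OF trP pp g0 g1])
  also have "Wop P \<gamma> p (\<lambda>s'. (CEv s' - Qt t w s') \<bullet> d s') s0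
      = (\<Sum>s'\<in>UNIV. wt P \<gamma> p s0 s' * ((CEv s' - Qt t w s') \<bullet> d s'))"
    by (rule Wop_weights[OF trP pp g0 g1])
  also have "\<dots> = (\<Sum>s'\<in>UNIV. \<Sum>a\<in>UNIV. (wt P \<gamma> p s0 s' * (pol t w s' $ a - p s' $ a)) * (CE t s' a w - Qt t w s' $ a))"
    by (simp add: inner_vec_def CEv_def d_def sum_distrib_left mult_ac)
  finally show ?thesis unfolding Qv_def d_def Wop_const[OF trP pp g0 g1] by simp
qed

definition T :: "'s \<Rightarrow> ('w \<Rightarrow> 's \<Rightarrow> real ^ 'a) \<Rightarrow> nat \<Rightarrow> 'w \<Rightarrow> real" where
  "T s0 p t w = \<eta> t * (G t w + Mh\<^sup>2) / (1 - \<gamma>) + 2 * vs / (1 - \<gamma>) + Z s0 p t w"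

definition Ub :: "'s \<Rightarrow> 'w \<Rightarrow> real" where
  "Ub s0 w = ((1 / \<eta> 0) * D0 / (1 - \<gamma>) + (\<Sum>t\<in>{0..<k}. T s0 (\<lambda>_. pstar) t w)) / k
     + (\<Sum>j\<in>{1..<k}. (\<Sum>t\<in>{k - 1 - j..<k}. T s0 (pol (k - 1 - j)) t w) / (real j * (real j + 1)))"

lemma opt_w: "w \<in> space M \<Longrightarrow> \<forall>t s. \<forall>q\<in>prob_simplex. \<eta> t * (Qt t w s \<bullet> pol (Suc t) w s + h s (pol (Suc t) w s)) + bregman \<omega> g\<omega> (pol (Suc t) w s) (pol t w s)
          \<le> \<eta> t * (Qt t w s \<bullet> q + h s q) + bregman \<omega> g\<omega> q (pol t w s)"
  using spmd by blast

lemma window_w: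
  assumes w: "w \<in> space M" and pp: "is_policy p" and mk: "m \<le> k"
    and bias: "\<forall>t. dual_normF nrm (\<lambda>s. \<chi> a. CE t s a w - Qfun P c h \<gamma> (pol t w) s $ a) \<le> vs"
  shows "(\<Sum>t\<in>{m..<k}. Vfun P c h \<gamma> (pol t w) s0 - Vfun P c h \<gamma> p s0)
     \<le> (1 / \<eta> m) * Wop P \<gamma> p (\<lambda>s'. bregman \<omega> g\<omega> (p s') (pol m w s')) s0
       + (\<Sum>t\<in>{m..<k}. \<eta> t * (G t w + Mh\<^sup>2) / (1 - \<gamma>) + 2 * vs / (1 - \<gamma>)
          + (\<Sum>s'\<in>UNIV. \<Sum>a\<in>UNIV. (wt P \<gamma> p s0 s' * (pol t w s' $ a - p s' $ a)) * (CE t s' a w - Qt t w s' $ a)))"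
proof -
  have "(\<Sum>t\<in>{m..<k}. Vfun P c h \<gamma> (pol t w) s0 - Vfun P c h \<gamma> p s0)
     \<le> (1 / \<eta> m) * Wop P \<gamma> p (\<lambda>s'. bregman \<omega> g\<omega> (p s') (pol m w s')) s0
       + (\<Sum>t\<in>{m..<k}. \<eta> t * ((dual_normF nrm (Qt t w))\<^sup>2 + Mh\<^sup>2) / (1 - \<gamma>)
            + Wop P \<gamma> p (\<lambda>s'. (Qfun P c h \<gamma> (pol t w) s' - Qt t w s') \<bullet> (pol t w s' - p s')) s0)"
    by (rule window[where polseq="\<lambda>t. pol t w" and qt="\<lambda>t. Qt t w", OF _ pp opt_w[OF w] eta_pos eta_mono mk])
       (use pol_policy[OF w] in blast)
  also have "\<dots> \<le> (1 / \<eta> m) * Wop P \<gamma> p (\<lambda>s'. bregman \<omega> g\<omega> (p s') (pol m w s')) s0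
       + (\<Sum>t\<in>{m..<k}. \<eta> t * (G t w + Mh\<^sup>2) / (1 - \<gamma>) + 2 * vs / (1 - \<gamma>)
          + (\<Sum>s'\<in>UNIV. \<Sum>a\<in>UNIV. (wt P \<gamma> p s0 s' * (pol t w s' $ a - p s' $ a)) * (CE t s' a w - Qt t w s' $ a)))"
  proof -
    have "Wop P \<gamma> p (\<lambda>s'. (Qfun P c h \<gamma> (pol t w) s' - Qt t w s') \<bullet> (pol t w s' - p s')) s0
        \<le> 2 * vs / (1 - \<gamma>) + (\<Sum>s'\<in>UNIV. \<Sum>a\<in>UNIV. (wt P \<gamma> p s0 s' * (pol t w s' $ a - p s' $ a)) * (CE t s' a w - Qt t w s' $ a))" for t
      by (rule err_bound[OF w pp]) (use bias in blast)
    then show ?thesis unfolding G_def by (intro add_left_mono sum_mono) (simp add: add.assoc)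
  qed
  finally show ?thesis .
qed

lemma bregman_self: "bregman \<omega> g\<omega> x x = 0"
  unfolding bregman_def by simp

lemma pointwise:
  assumes w: "w \<in> space M"
    and bias: "\<forall>t. dual_normF nrm (\<lambda>s. \<chi> a. CE t s a w - Qfun P c h \<gamma> (pol t w) s $ a) \<le> vs"
  shows "Vfun P c h \<gamma> (pol (k - 1) w) s0 - Vfun P c h \<gamma> pstar s0 \<le> Ub s0 w"
proof -
  define v where "v t = Vfun P c h \<gamma> (pol t w) s0 - Vfun P c h \<gamma> pstar s0" for t
  have id: "v (k - 1) = (\<Sum>t\<in>{0..<k}. v t) / k
     + (\<Sum>j\<in>{1..<k}. (\<Sum>t\<in>{k - 1 - j..<k}. v t - v (k - 1 - j)) / (real j * (real j + 1)))"
    by (rule last_iter[OF k])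
  have eta0: "0 \<le> 1 / \<eta> 0" using eta_pos by (simp add: less_imp_le)
  have avg: "(\<Sum>t\<in>{0..<k}. v t) \<le> (1 / \<eta> 0) * D0 / (1 - \<gamma>) + (\<Sum>t\<in>{0..<k}. T s0 (\<lambda>_. pstar) t w)"
  proof -
    have "(\<Sum>t\<in>{0..<k}. v t) \<le> (1 / \<eta> 0) * Wop P \<gamma> pstar (\<lambda>s'. bregman \<omega> g\<omega> (pstar s') (pol 0 w s')) s0
       + (\<Sum>t\<in>{0..<k}. T s0 (\<lambda>_. pstar) t w)"
      unfolding v_def T_def Z_def by (rule window_w[OF w pstar _ bias]) simp
    moreover have "Wop P \<gamma> pstar (\<lambda>s'. bregman \<omega> g\<omega> (pstar s') (pol 0 w s')) s0 \<le> Wop P \<gamma> pstar (\<lambda>_. D0) s0"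
      using D0(2) pstar pi0(2) w unfolding is_policy_def by (intro Wop_mono[OF trP pstar g0 g1]) auto
    moreover have "Wop P \<gamma> pstar (\<lambda>_. D0) s0 = D0 / (1 - \<gamma>)" by (rule Wop_const[OF trP pstar g0 g1])
    ultimately show ?thesis using eta0 by (smt (verit, best) mult_left_mono times_divide_eq_right)
  qed
  have win: "(\<Sum>t\<in>{k - 1 - j..<k}. v t - v (k - 1 - j)) \<le> (\<Sum>t\<in>{k - 1 - j..<k}. T s0 (pol (k - 1 - j)) t w)"
    if j: "j \<in> {1..<k}" for j
  proof -
    let ?m = "k - 1 - j"
    have pm: "is_policy (pol ?m w)" by (rule pol_policy[OF w])
    have z: "Wop P \<gamma> (pol ?m w) (\<lambda>s'. bregman \<omega> g\<omega> (pol ?m w s') (pol ?m w s')) s0 = 0"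
      unfolding bregman_self using Wop_const[OF trP pm g0 g1, of 0 s0] by simp
    have "(\<Sum>t\<in>{?m..<k}. Vfun P c h \<gamma> (pol t w) s0 - Vfun P c h \<gamma> (pol ?m w) s0)
       \<le> (1 / \<eta> ?m) * Wop P \<gamma> (pol ?m w) (\<lambda>s'. bregman \<omega> g\<omega> (pol ?m w s') (pol ?m w s')) s0
         + (\<Sum>t\<in>{?m..<k}. T s0 (pol ?m) t w)"
      unfolding T_def Z_def by (rule window_w[OF w pm _ bias]) simp
    then show ?thesis unfolding z v_def by simp
  qed
  have "v (k - 1) \<le> ((1 / \<eta> 0) * D0 / (1 - \<gamma>) + (\<Sum>t\<in>{0..<k}. T s0 (\<lambda>_. pstar) t w)) / k
     + (\<Sum>j\<in>{1..<k}. (\<Sum>t\<in>{k - 1 - j..<k}. T s0 (pol (k - 1 - j)) t w) / (real j * (real j + 1)))"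
  proof -
    have "(\<Sum>t\<in>{0..<k}. v t) / k \<le> ((1 / \<eta> 0) * D0 / (1 - \<gamma>) + (\<Sum>t\<in>{0..<k}. T s0 (\<lambda>_. pstar) t w)) / k"
      using avg by (intro divide_right_mono) auto
    moreover have "(\<Sum>j\<in>{1..<k}. (\<Sum>t\<in>{k - 1 - j..<k}. v t - v (k - 1 - j)) / (real j * (real j + 1)))
       \<le> (\<Sum>j\<in>{1..<k}. (\<Sum>t\<in>{k - 1 - j..<k}. T s0 (pol (k - 1 - j)) t w) / (real j * (real j + 1)))"
    proof (rule sum_mono)
      fix j assume j: "j \<in> {1..<k}"
      show "(\<Sum>t\<in>{k - 1 - j..<k}. v t - v (k - 1 - j)) / (real j * (real j + 1))
          \<le> (\<Sum>t\<in>{k - 1 - j..<k}. T s0 (pol (k - 1 - j)) t w) / (real j * (real j + 1))"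
        by (rule divide_right_mono[OF win[OF j]]) simp
    qed
    ultimately show ?thesis using id by linarith
  qed
  then show ?thesis unfolding Ub_def v_def .
qed

lemma T_int:
  assumes pm: "\<And>s a. (\<lambda>w. p w s $ a) \<in> borel_measurable (F t)"
    and pp: "\<And>w. w \<in> space M \<Longrightarrow> is_policy (p w)"
  shows "integrable M (T s0 p t)" "(\<integral>w. T s0 p t w \<partial>M) \<le> (\<eta> t * (Qbar\<^sup>2 + Mh\<^sup>2) + 2 * vs) / (1 - \<gamma>)"
proof -
  have Zi: "integrable M (Z s0 p t)" "(\<integral>w. Z s0 p t w \<partial>M) = 0" using Z_int[OF pm pp] by auto
  have eq: "T s0 p t = (\<lambda>w. (\<eta> t / (1 - \<gamma>)) * G t w + ((\<eta> t * Mh\<^sup>2 + 2 * vs) / (1 - \<gamma>) + Z s0 p t w))"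
    by (rule ext) (simp add: T_def add_divide_distrib distrib_left algebra_simps)
  have ci: "integrable M (\<lambda>w. (\<eta> t * Mh\<^sup>2 + 2 * vs) / (1 - \<gamma>))"
    using prob_space.finite_measure[OF prob] by (rule finite_measure.integrable_const)
  show "integrable M (T s0 p t)" unfolding eq
    by (intro Bochner_Integration.integrable_add integrable_mult_right G_int ci Zi(1))
  have "(\<integral>w. T s0 p t w \<partial>M) = (\<eta> t / (1 - \<gamma>)) * (\<integral>w. G t w \<partial>M) + ((\<eta> t * Mh\<^sup>2 + 2 * vs) / (1 - \<gamma>) + 0)"
    unfolding eq using G_int ci Zi prob_space.prob_space[OF prob]
    by (simp add: Bochner_Integration.integral_add Bochner_Integration.integrable_add)
  also have "\<dots> \<le> (\<eta> t / (1 - \<gamma>)) * Qbar\<^sup>2 + (\<eta> t * Mh\<^sup>2 + 2 * vs) / (1 - \<gamma>)"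
  proof -
    have "\<eta> t * (\<integral>w. G t w \<partial>M) \<le> \<eta> t * Qbar\<^sup>2"
      by (rule mult_left_mono[OF G_E]) (use eta_pos in \<open>simp add: less_imp_le\<close>)
    then have "\<eta> t * (\<integral>w. G t w \<partial>M) / (1 - \<gamma>) \<le> \<eta> t * Qbar\<^sup>2 / (1 - \<gamma>)"
      using g1 by (intro divide_right_mono) auto
    then show ?thesis by simp
  qed
  also have "\<dots> = (\<eta> t * (Qbar\<^sup>2 + Mh\<^sup>2) + 2 * vs) / (1 - \<gamma>)"
    by (simp add: add_divide_distrib algebra_simps)
  finally show "(\<integral>w. T s0 p t w \<partial>M) \<le> (\<eta> t * (Qbar\<^sup>2 + Mh\<^sup>2) + 2 * vs) / (1 - \<gamma>)" .
qed

lemma S_int: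
  assumes m: "m \<le> k"
  shows "integrable M (\<lambda>w. \<Sum>t\<in>{m..<k}. T s0 (pol m) t w)"
    "(\<integral>w. (\<Sum>t\<in>{m..<k}. T s0 (pol m) t w) \<partial>M) \<le> (\<Sum>t\<in>{m..<k}. (\<eta> t * (Qbar\<^sup>2 + Mh\<^sup>2) + 2 * vs) / (1 - \<gamma>))"
proof -
  have ti: "integrable M (T s0 (pol m) t)" "(\<integral>w. T s0 (pol m) t w \<partial>M) \<le> (\<eta> t * (Qbar\<^sup>2 + Mh\<^sup>2) + 2 * vs) / (1 - \<gamma>)"
    if t: "t \<in> {m..<k}" for t
    using T_int[of "pol m" t s0] pol_measF[of m t] pol_policy t by auto
  show "integrable M (\<lambda>w. \<Sum>t\<in>{m..<k}. T s0 (pol m) t w)"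
    by (rule Bochner_Integration.integrable_sum) (rule ti(1))
  have "(\<integral>w. (\<Sum>t\<in>{m..<k}. T s0 (pol m) t w) \<partial>M) = (\<Sum>t\<in>{m..<k}. \<integral>w. T s0 (pol m) t w \<partial>M)"
    by (rule Bochner_Integration.integral_sum) (rule ti(1))
  also have "\<dots> \<le> (\<Sum>t\<in>{m..<k}. (\<eta> t * (Qbar\<^sup>2 + Mh\<^sup>2) + 2 * vs) / (1 - \<gamma>))"
    by (rule sum_mono) (rule ti(2))
  finally show "(\<integral>w. (\<Sum>t\<in>{m..<k}. T s0 (pol m) t w) \<partial>M) \<le> (\<Sum>t\<in>{m..<k}. (\<eta> t * (Qbar\<^sup>2 + Mh\<^sup>2) + 2 * vs) / (1 - \<gamma>))" .
qed

lemma S0_int: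
  shows "integrable M (\<lambda>w. \<Sum>t\<in>{0..<k}. T s0 (\<lambda>_. pstar) t w)"
    "(\<integral>w. (\<Sum>t\<in>{0..<k}. T s0 (\<lambda>_. pstar) t w) \<partial>M) \<le> (\<Sum>t\<in>{0..<k}. (\<eta> t * (Qbar\<^sup>2 + Mh\<^sup>2) + 2 * vs) / (1 - \<gamma>))"
proof -
  have ti: "integrable M (T s0 (\<lambda>_. pstar) t)" "(\<integral>w. T s0 (\<lambda>_. pstar) t w \<partial>M) \<le> (\<eta> t * (Qbar\<^sup>2 + Mh\<^sup>2) + 2 * vs) / (1 - \<gamma>)" for t
    using T_int[of "\<lambda>_. pstar" t s0] pstar by auto
  show "integrable M (\<lambda>w. \<Sum>t\<in>{0..<k}. T s0 (\<lambda>_. pstar) t w)"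
    by (rule Bochner_Integration.integrable_sum) (rule ti(1))
  have "(\<integral>w. (\<Sum>t\<in>{0..<k}. T s0 (\<lambda>_. pstar) t w) \<partial>M) = (\<Sum>t\<in>{0..<k}. \<integral>w. T s0 (\<lambda>_. pstar) t w \<partial>M)"
    by (rule Bochner_Integration.integral_sum) (rule ti(1))
  also have "\<dots> \<le> (\<Sum>t\<in>{0..<k}. (\<eta> t * (Qbar\<^sup>2 + Mh\<^sup>2) + 2 * vs) / (1 - \<gamma>))"
    by (rule sum_mono) (rule ti(2))
  finally show "(\<integral>w. (\<Sum>t\<in>{0..<k}. T s0 (\<lambda>_. pstar) t w) \<partial>M) \<le> (\<Sum>t\<in>{0..<k}. (\<eta> t * (Qbar\<^sup>2 + Mh\<^sup>2) + 2 * vs) / (1 - \<gamma>))" .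
qed

lemma Ub_int:
  shows "integrable M (Ub s0)" "(\<integral>w. Ub s0 w \<partial>M) \<le> bnd \<eta> D0 (Qbar\<^sup>2 + Mh\<^sup>2) vs k / (1 - \<gamma>)"
proof -
  let ?R = "1 - \<gamma>" and ?Gb = "Qbar\<^sup>2 + Mh\<^sup>2"
  let ?C0 = "(1 / \<eta> 0) * D0 / (1 - \<gamma>)"
  let ?Sz = "\<lambda>w. \<Sum>t\<in>{0..<k}. T s0 (\<lambda>_. pstar) t w"
  let ?Sw = "\<lambda>j w. \<Sum>t\<in>{k - 1 - j..<k}. T s0 (pol (k - 1 - j)) t w"
  let ?d = "\<lambda>j::nat. real j * (real j + 1)"
  have fm: "finite_measure M" by (rule prob_space.finite_measure[OF prob])
  have i0: "integrable M (\<lambda>w. (?C0 + ?Sz w) / k)"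
    by (intro integrable_divide Bochner_Integration.integrable_add finite_measure.integrable_const[OF fm] S0_int(1))
  have iS: "integrable M (?Sw j)" for j using S_int(1)[of "k - 1 - j" s0] by simp
  have i1: "integrable M (\<lambda>w. \<Sum>j\<in>{1..<k}. ?Sw j w / ?d j)"
    by (intro Bochner_Integration.integrable_sum integrable_divide iS)
  have Ueq: "Ub s0 = (\<lambda>w. (?C0 + ?Sz w) / k + (\<Sum>j\<in>{1..<k}. ?Sw j w / ?d j))"
    by (rule ext) (simp add: Ub_def)
  show "integrable M (Ub s0)" unfolding Ueq by (intro Bochner_Integration.integrable_add i0 i1)
  have "(\<integral>w. Ub s0 w \<partial>M) = (\<integral>w. (?C0 + ?Sz w) / k \<partial>M) + (\<integral>w. (\<Sum>j\<in>{1..<k}. ?Sw j w / ?d j) \<partial>M)"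
    unfolding Ueq by (rule Bochner_Integration.integral_add[OF i0 i1])
  also have "(\<integral>w. (?C0 + ?Sz w) / k \<partial>M) = (?C0 + (\<integral>w. ?Sz w \<partial>M)) / k"
  proof -
    have "(\<integral>w. (?C0 + ?Sz w) \<partial>M) = (\<integral>w. ?C0 \<partial>M) + (\<integral>w. ?Sz w \<partial>M)"
      by (rule Bochner_Integration.integral_add[OF finite_measure.integrable_const[OF fm] S0_int(1)])
    also have "(\<integral>w. ?C0 \<partial>M) = ?C0" using prob_space.prob_space[OF prob] by simp
    finally have "(\<integral>w. (?C0 + ?Sz w) \<partial>M) = ?C0 + (\<integral>w. ?Sz w \<partial>M)" .
    then show ?thesis by (simp only: integral_divide_zero)
  qed
  also have "(\<integral>w. (\<Sum>j\<in>{1..<k}. ?Sw j w / ?d j) \<partial>M) = (\<Sum>j\<in>{1..<k}. (\<integral>w. ?Sw j w \<partial>M) / ?d j)"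
  proof -
    have idv: "integrable M (\<lambda>w. ?Sw j w / ?d j)" for j by (rule integrable_divide[OF iS])
    have "(\<integral>w. (\<Sum>j\<in>{1..<k}. ?Sw j w / ?d j) \<partial>M) = (\<Sum>j\<in>{1..<k}. \<integral>w. ?Sw j w / ?d j \<partial>M)"
      by (rule Bochner_Integration.integral_sum) (rule idv)
    then show ?thesis by (simp only: integral_divide_zero)
  qed
  also have "(?C0 + (\<integral>w. ?Sz w \<partial>M)) / k + (\<Sum>j\<in>{1..<k}. (\<integral>w. ?Sw j w \<partial>M) / ?d j)
      \<le> (?C0 + (\<Sum>t\<in>{0..<k}. (\<eta> t * ?Gb + 2 * vs) / ?R)) / k
        + (\<Sum>j\<in>{1..<k}. (\<Sum>t\<in>{k - 1 - j..<k}. (\<eta> t * ?Gb + 2 * vs) / ?R) / ?d j)"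
  proof (rule add_mono)
    show "(?C0 + (\<integral>w. ?Sz w \<partial>M)) / k \<le> (?C0 + (\<Sum>t\<in>{0..<k}. (\<eta> t * ?Gb + 2 * vs) / ?R)) / k"
      using S0_int(2)[of s0] by (intro divide_right_mono) auto
    show "(\<Sum>j\<in>{1..<k}. (\<integral>w. ?Sw j w \<partial>M) / ?d j)
        \<le> (\<Sum>j\<in>{1..<k}. (\<Sum>t\<in>{k - 1 - j..<k}. (\<eta> t * ?Gb + 2 * vs) / ?R) / ?d j)"
    proof (rule sum_mono)
      fix j assume "j \<in> {1..<k}"
      show "(\<integral>w. ?Sw j w \<partial>M) / ?d j \<le> (\<Sum>t\<in>{k - 1 - j..<k}. (\<eta> t * ?Gb + 2 * vs) / ?R) / ?d j"
        using S_int(2)[of "k - 1 - j" s0] by (intro divide_right_mono) auto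
    qed
  qed
  also have "\<dots> = bnd \<eta> D0 ?Gb vs k / ?R"
  proof -
    have a: "(\<Sum>t\<in>{0..<k}. (\<eta> t * ?Gb + 2 * vs) / ?R) = (\<Sum>t\<in>{0..<k}. \<eta> t * ?Gb + 2 * vs) / ?R"
      by (rule sum_divide_distrib[symmetric])
    have b: "(\<Sum>j\<in>{1..<k}. (\<Sum>t\<in>{k - 1 - j..<k}. (\<eta> t * ?Gb + 2 * vs) / ?R) / ?d j)
        = (\<Sum>j\<in>{1..<k}. (\<Sum>t\<in>{k - 1 - j..<k}. \<eta> t * ?Gb + 2 * vs) / ?d j) / ?R"
    proof -
      have "(\<Sum>j\<in>{1..<k}. (\<Sum>t\<in>{k - 1 - j..<k}. (\<eta> t * ?Gb + 2 * vs) / ?R) / ?d j)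
          = (\<Sum>j\<in>{1..<k}. ((\<Sum>t\<in>{k - 1 - j..<k}. \<eta> t * ?Gb + 2 * vs) / ?d j) / ?R)"
        by (rule sum.cong[OF refl]) (simp add: sum_divide_distrib[symmetric] divide_divide_eq_left mult.commute)
      also have "\<dots> = (\<Sum>j\<in>{1..<k}. (\<Sum>t\<in>{k - 1 - j..<k}. \<eta> t * ?Gb + 2 * vs) / ?d j) / ?R"
        by (rule sum_divide_distrib[symmetric])
      finally show ?thesis .
    qed
    show ?thesis unfolding a b bnd_def by (simp add: add_divide_distrib divide_divide_eq_left mult.commute)
  qed
  finally show "(\<integral>w. Ub s0 w \<partial>M) \<le> bnd \<eta> D0 (Qbar\<^sup>2 + Mh\<^sup>2) vs k / (1 - \<gamma>)" .
qed

lemma main_bound: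
  assumes int: "integrable M (\<lambda>w. Vfun P c h \<gamma> (pol (k - 1) w) s0 - Vfun P c h \<gamma> pstar s0)"
  shows "(\<integral>w. Vfun P c h \<gamma> (pol (k - 1) w) s0 - Vfun P c h \<gamma> pstar s0 \<partial>M)
     \<le> bnd \<eta> D0 (Qbar\<^sup>2 + Mh\<^sup>2) vs k / (1 - \<gamma>)"
proof -
  have "AE w in M. \<forall>t. dual_normF nrm (\<lambda>s. \<chi> a. CE t s a w - Qfun P c h \<gamma> (pol t w) s $ a) \<le> vs"
    using A_bias unfolding CE_def by (simp add: AE_all_countable)
  then have ae: "AE w in M. Vfun P c h \<gamma> (pol (k - 1) w) s0 - Vfun P c h \<gamma> pstar s0 \<le> Ub s0 w"
    using AE_space[of M] by eventually_elim (rule pointwise, assumption+)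
  have "(\<integral>w. Vfun P c h \<gamma> (pol (k - 1) w) s0 - Vfun P c h \<gamma> pstar s0 \<partial>M) \<le> (\<integral>w. Ub s0 w \<partial>M)"
    by (rule integral_mono_AE[OF int Ub_int(1) ae])
  also have "\<dots> \<le> bnd \<eta> D0 (Qbar\<^sup>2 + Mh\<^sup>2) vs k / (1 - \<gamma>)" by (rule Ub_int(2))
  finally show ?thesis .
qed

end

theorem proposition5p3:
  fixes P :: "'s::finite \<Rightarrow> 'a::finite \<Rightarrow> 's \<Rightarrow> real"
    and c :: "'s \<Rightarrow> 'a \<Rightarrow> real"
    and \<gamma> :: real
    and nrm :: "real ^ 'a \<Rightarrow> real"
    and \<omega> :: "real ^ 'a \<Rightarrow> real"
    and g\<omega> :: "real ^ 'a \<Rightarrow> real ^ 'a"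
    and h :: "'s \<Rightarrow> real ^ 'a \<Rightarrow> real"
    and \<mu>h Mh :: real
    and pstar :: "'s \<Rightarrow> real ^ 'a"
    and M :: "'w measure" and X :: "'x measure"
    and \<xi> :: "nat \<Rightarrow> 'w \<Rightarrow> 'x"
    and Qt :: "nat \<Rightarrow> 'w \<Rightarrow> 's \<Rightarrow> real ^ 'a"
    and pol :: "nat \<Rightarrow> 'w \<Rightarrow> 's \<Rightarrow> real ^ 'a"
    and \<pi>0 :: "'s \<Rightarrow> real ^ 'a"
    and \<eta> :: "nat \<Rightarrow> real"
    and vs \<sigma> Qbar D0 :: real
    and k :: nat
  assumes trans: "is_transition P"
    and gamma: "0 \<le> \<gamma>" "\<gamma> < 1"
    and norm: "is_norm_fn nrm"
    and norm_simplex: "\<forall>p\<in>prob_simplex. nrm p \<le> 1"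
    and dgf: "is_dgf nrm \<omega> g\<omega>"
    and reg: "regularizer_ok \<omega> g\<omega> h \<mu>h"
    and lip: "\<forall>s. \<forall>p\<in>prob_simplex. \<forall>p'\<in>prob_simplex. h s p - h s p' \<le> Mh * nrm (p - p')"
    and opt: "is_policy pstar"
      "\<forall>\<pi>. is_policy \<pi> \<longrightarrow> (\<forall>s. Vfun P c h \<gamma> pstar s \<le> Vfun P c h \<gamma> \<pi> s)"
    and prob: "prob_space M"
    and xi_meas: "\<forall>t. \<xi> t \<in> measurable M X"
    and pi0: "is_policy \<pi>0" "\<forall>w\<in>space M. pol 0 w = \<pi>0"
    and pol_meas: "\<forall>t s a. (\<lambda>w. pol t w s $ a) \<in> borel_measurable (hist_alg M X \<xi> t)"
    and Qt_meas: "\<forall>t s a. (\<lambda>w. Qt t w s $ a) \<in> borel_measurable (hist_alg M X \<xi> (Suc t))"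
    and spmd: "\<forall>t. \<forall>w\<in>space M. \<forall>s. pol (Suc t) w s \<in> prob_simplex \<and>
       (\<forall>p\<in>prob_simplex.
          \<eta> t * (Qt t w s \<bullet> pol (Suc t) w s + h s (pol (Suc t) w s))
            + bregman \<omega> g\<omega> (pol (Suc t) w s) (pol t w s)
          \<le> \<eta> t * (Qt t w s \<bullet> p + h s p) + bregman \<omega> g\<omega> p (pol t w s))"
    and A_nonneg: "0 \<le> vs" "0 \<le> \<sigma>" "0 \<le> Qbar"
    and A_bias: "\<forall>t. AE w in M. dual_normF nrm (\<lambda>s. \<chi> a.
         real_cond_exp M (hist_alg M X \<xi> t) (\<lambda>w'. Qt t w' s $ a) w
         - Qfun P c h \<gamma> (pol t w) s $ a) \<le> vs"
    and A_var: "\<forall>t. AE w in M. nn_cond_exp M (hist_alg M X \<xi> t)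
         (\<lambda>w'. ennreal ((dual_normF nrm (\<lambda>s. Qt t w' s - Qfun P c h \<gamma> (pol t w') s))\<^sup>2)) w
         \<le> ennreal (\<sigma>\<^sup>2)"
    and A_mom: "\<forall>t. AE w in M. nn_cond_exp M (hist_alg M X \<xi> t)
         (\<lambda>w'. ennreal ((dual_normF nrm (Qt t w'))\<^sup>2)) w \<le> ennreal (Qbar\<^sup>2)"
    and D0: "0 < D0" "\<forall>s. \<forall>p\<in>prob_simplex. bregman \<omega> g\<omega> p (\<pi>0 s) \<le> D0"
    and k: "1 \<le> k"
  shows
    "(\<forall>\<alpha>>0. (\<forall>t. \<eta> t = \<alpha> / sqrt (real k)) \<longrightarrow>
        (\<forall>s. (\<integral>w. Vfun P c h \<gamma> (pol (k - 1) w) s - Vfun P c h \<gamma> pstar s \<partial>M)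
           \<le> (D0 / \<alpha> + 2 * \<alpha> * (Qbar\<^sup>2 + Mh\<^sup>2) * ln (2 * real k)) / ((1 - \<gamma>) * sqrt (real k))
             + 4 * vs * (sqrt 2 + 8 * sqrt (real k)) / (1 - \<gamma>)))
     \<and> ((0 < \<mu>h \<and> (\<forall>t. \<eta> t = 1 / (\<mu>h * (real t + 1)))) \<longrightarrow>
        (\<forall>s. (\<integral>w. Vfun P c h \<gamma> (pol (k - 1) w) s - Vfun P c h \<gamma> pstar s \<partial>M)
           \<le> (\<mu>h * D0 + 3 * (Qbar\<^sup>2 + Mh\<^sup>2) * ln (2 * real k) / \<mu>h) / ((1 - \<gamma>) * real k)
             + 4 * vs * ln (2 * real k) / (1 - \<gamma>)))"
proof (intro conjI allI impI)
  have mu0: "0 \<le> \<mu>h" using reg unfolding regularizer_ok_def by blast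
  have kpos: "real k > 0" using k by simp
  have R: "1 - \<gamma> > 0" using gamma by simp
  have lnk: "0 \<le> ln (2 * real k)" using k by simp
  have Gb: "0 \<le> Qbar\<^sup>2 + Mh\<^sup>2" by simp
  {
    fix \<alpha> :: real and s
    assume a: "\<alpha> > 0" and et: "\<forall>t. \<eta> t = \<alpha> / sqrt (real k)"
    have sk: "sqrt (real k) > 0" using kpos by simp
    have ep: "\<forall>t. \<eta> t > 0" using et a sk by simp
    have em: "\<forall>t. 1 / \<eta> (Suc t) \<le> 1 / \<eta> t + \<mu>h" using et mu0 by simp
    have loc: "spmd_full P c \<gamma> nrm \<omega> g\<omega> h \<mu>h Mh pstar M X \<xi> Qt pol \<pi>0 \<eta> vs Qbar D0 k"
      unfolding spmd_full_def spmd_full_axioms_def spmd_det_def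
      by (intro conjI) (fact trans gamma norm dgf reg lip opt(1) prob xi_meas pi0 pol_meas Qt_meas spmd A_nonneg(1) A_nonneg(3)
        A_bias A_mom D0 k norm_simplex ep em)+
    have etaeq: "\<eta> = (\<lambda>t. \<alpha> / sqrt (real k))" using et by auto
    let ?RHS = "(D0 / \<alpha> + 2 * \<alpha> * (Qbar\<^sup>2 + Mh\<^sup>2) * ln (2 * real k)) / ((1 - \<gamma>) * sqrt (real k))
             + 4 * vs * (sqrt 2 + 8 * sqrt (real k)) / (1 - \<gamma>)"
    show "(\<integral>w. Vfun P c h \<gamma> (pol (k - 1) w) s - Vfun P c h \<gamma> pstar s \<partial>M) \<le> ?RHS"
    proof (cases "integrable M (\<lambda>w. Vfun P c h \<gamma> (pol (k - 1) w) s - Vfun P c h \<gamma> pstar s)")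
      case True
      have "(\<integral>w. Vfun P c h \<gamma> (pol (k - 1) w) s - Vfun P c h \<gamma> pstar s \<partial>M)
          \<le> bnd \<eta> D0 (Qbar\<^sup>2 + Mh\<^sup>2) vs k / (1 - \<gamma>)"
        by (rule spmd_full.main_bound[OF loc True])
      also have "\<dots> \<le> ?RHS" unfolding etaeq
        by (rule case1_bnd[OF a k Gb A_nonneg(1) R])
      finally show ?thesis .
    next
      case False
      then have z: "(\<integral>w. Vfun P c h \<gamma> (pol (k - 1) w) s - Vfun P c h \<gamma> pstar s \<partial>M) = 0"
        by (rule not_integrable_integral_eq)
      have "0 \<le> D0 / \<alpha> + 2 * \<alpha> * (Qbar\<^sup>2 + Mh\<^sup>2) * ln (2 * real k)"
        using D0(1) a lnk Gb by (intro add_nonneg_nonneg mult_nonneg_nonneg) auto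
      then have "0 \<le> (D0 / \<alpha> + 2 * \<alpha> * (Qbar\<^sup>2 + Mh\<^sup>2) * ln (2 * real k)) / ((1 - \<gamma>) * sqrt (real k))"
        using R sk by simp
      moreover have "0 \<le> 4 * vs * (sqrt 2 + 8 * sqrt (real k)) / (1 - \<gamma>)"
        using A_nonneg(1) R by simp
      ultimately show ?thesis unfolding z by linarith
    qed
  }
  {
    fix s
    assume mh: "0 < \<mu>h \<and> (\<forall>t. \<eta> t = 1 / (\<mu>h * (real t + 1)))"
    have m: "\<mu>h > 0" and et: "\<forall>t. \<eta> t = 1 / (\<mu>h * (real t + 1))" using mh by auto
    have ep: "\<forall>t. \<eta> t > 0" using et m by simp
    have em: "\<forall>t. 1 / \<eta> (Suc t) \<le> 1 / \<eta> t + \<mu>h" using et m by (simp add: algebra_simps)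
    have loc: "spmd_full P c \<gamma> nrm \<omega> g\<omega> h \<mu>h Mh pstar M X \<xi> Qt pol \<pi>0 \<eta> vs Qbar D0 k"
      unfolding spmd_full_def spmd_full_axioms_def spmd_det_def
      by (intro conjI) (fact trans gamma norm dgf reg lip opt(1) prob xi_meas pi0 pol_meas Qt_meas spmd A_nonneg(1) A_nonneg(3)
        A_bias A_mom D0 k norm_simplex ep em)+
    have etaeq: "\<eta> = (\<lambda>t. 1 / (\<mu>h * (real t + 1)))" using et by auto
    let ?RHS = "(\<mu>h * D0 + 3 * (Qbar\<^sup>2 + Mh\<^sup>2) * ln (2 * real k) / \<mu>h) / ((1 - \<gamma>) * real k)
             + 4 * vs * ln (2 * real k) / (1 - \<gamma>)"
    show "(\<integral>w. Vfun P c h \<gamma> (pol (k - 1) w) s - Vfun P c h \<gamma> pstar s \<partial>M) \<le> ?RHS"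
    proof (cases "integrable M (\<lambda>w. Vfun P c h \<gamma> (pol (k - 1) w) s - Vfun P c h \<gamma> pstar s)")
      case True
      have "(\<integral>w. Vfun P c h \<gamma> (pol (k - 1) w) s - Vfun P c h \<gamma> pstar s \<partial>M)
          \<le> bnd \<eta> D0 (Qbar\<^sup>2 + Mh\<^sup>2) vs k / (1 - \<gamma>)"
        by (rule spmd_full.main_bound[OF loc True])
      also have "\<dots> \<le> ?RHS" unfolding etaeq
        by (rule case2_bnd[OF m k Gb A_nonneg(1) R])
      finally show ?thesis .
    next
      case False
      then have z: "(\<integral>w. Vfun P c h \<gamma> (pol (k - 1) w) s - Vfun P c h \<gamma> pstar s \<partial>M) = 0"
        by (rule not_integrable_integral_eq)
      have "0 \<le> \<mu>h * D0 + 3 * (Qbar\<^sup>2 + Mh\<^sup>2) * ln (2 * real k) / \<mu>h"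
        using D0(1) m lnk Gb by (intro add_nonneg_nonneg divide_nonneg_pos mult_nonneg_nonneg) auto
      then have "0 \<le> (\<mu>h * D0 + 3 * (Qbar\<^sup>2 + Mh\<^sup>2) * ln (2 * real k) / \<mu>h) / ((1 - \<gamma>) * real k)"
        using R kpos by simp
      moreover have "0 \<le> 4 * vs * ln (2 * real k) / (1 - \<gamma>)"
        using A_nonneg(1) R lnk by simp
      ultimately show ?thesis unfolding z by linarith
    qed
  }
qed

end
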